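(* Consider two pools of two participants. In the first pool, $X_1,X_2$ are independent with $X_i\sim\Gamma(\mu_i,\lambda)$, $S=X_1+X_2\sim\Gamma(\mu,\lambda)$ with $\mu=\mu_1+\mu_2$, and disutilities $v_i(s)=\frac{s^{1+\sigma_i}}{1+\sigma_i}$ with $\sigma_1>0$ and $\sigma_2=2\sigma_1$. In the second pool, $\tilde X_1,\tilde X_2$ are independent with $\tilde X_i\sim\Gamma(\tilde\mu_i,\tilde\lambda)$, $\tilde S=\tilde X_1+\tilde X_2\sim\Gamma(\tilde\mu,\tilde\lambda)$ with $\tilde\mu=\tilde\mu_1+\tilde\mu_2$, and disutilities $\tilde v_i(s)=\frac{s^{1+\tilde\sigma_i}}{1+\tilde\sigma_i}$ with $\tilde\sigma_1>0$ and $\tilde\sigma_2=2\tilde\sigma_1$. Assume $E[X_i]=E[\tilde X_i]$ for $i=1,2$, $\mu\ge\tilde\mu$ and $\mu/\lambda=\tilde\mu/\tilde\lambda$ (so that $S\preceq_{\mathrm{CX}}\tilde S$). Let $(h_1,h_2)$ and $(\tilde h_1,\tilde h_2)$ be the actuarially fair Pareto optimal risk-sharing rules of the two pools. Then $h_i(S)\preceq_{\mathrm{CX}}\tilde h_i(\tilde S)$ for $i=1,2$.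
   Context: $\Gamma(\mu,\lambda)$ denotes the gamma distribution with shape $\mu>0$ and rate $\lambda>0$, density $\frac{\lambda^\mu}{\Gamma(\mu)}s^{\mu-1}e^{-\lambda s}$ on $(0,\infty)$. For random variables $X,Y$, $X\preceq_{\mathrm{CX}}Y$ (convex order) means $E[g(X)]\le E[g(Y)]$ for all convex $g:\mathbb{R}\to\mathbb{R}$ for which the expectations exist. For a pool with aggregate loss $S$ and disutilities $v_1,v_2$, a risk-sharing rule is a pair of functions $h_1,h_2:[0,\infty)\to\mathbb{R}_+$ with $h_1(s)+h_2(s)=s$; it is actuarially fair Pareto optimal (AFPO) if there exist a function $J:[0,\infty)\to\mathbb{R}_+$ and constants $\alpha_1,\alpha_2>0$ with $\alpha_iv_i'(h_i(s))=J(s)$ for all $s\ge0$ and $i=1,2$, and $E[h_i(S)]=E[X_i]$ for $i=1,2$. *)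

theory Defs
  imports "HOL-Probability.Probability"
begin

definition gamma_density :: "real \<Rightarrow> real \<Rightarrow> real \<Rightarrow> real" where
  "gamma_density mu lam s =
     (if s > 0 then lam powr mu / Gamma mu * s powr (mu - 1) * exp (- lam * s) else 0)"

definition gamma_distributed :: "'a measure \<Rightarrow> ('a \<Rightarrow> real) \<Rightarrow> real \<Rightarrow> real \<Rightarrow> bool" where
  "gamma_distributed M X mu lam \<longleftrightarrow>
     distributed M lborel X (\<lambda>s. ennreal (gamma_density mu lam s))"

definition cx_le :: "'a measure \<Rightarrow> ('a \<Rightarrow> real) \<Rightarrow> 'b measure \<Rightarrow> ('b \<Rightarrow> real) \<Rightarrow> bool" where
  "cx_le M X N Y \<longleftrightarrow>
     (\<forall>g :: real \<Rightarrow> real. convex_on UNIV g \<longrightarrow>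
        integrable M (\<lambda>\<omega>. g (X \<omega>)) \<longrightarrow> integrable N (\<lambda>\<omega>. g (Y \<omega>)) \<longrightarrow>
        (\<integral>\<omega>. g (X \<omega>) \<partial>M) \<le> (\<integral>\<omega>. g (Y \<omega>) \<partial>N))"

definition power_disutility :: "real \<Rightarrow> real \<Rightarrow> real" where
  "power_disutility \<sigma> s = s powr (1 + \<sigma>) / (1 + \<sigma>)"

definition power_marginal :: "real \<Rightarrow> real \<Rightarrow> real" where
  "power_marginal \<sigma> s = s powr \<sigma>"

lemma power_marginal_is_derivative:
  assumes "\<sigma> > 0" "s > 0"
  shows "(power_disutility \<sigma> has_real_derivative power_marginal \<sigma> s) (at s)"
proof -
  have "((\<lambda>s. s powr (1 + \<sigma>)) has_real_derivative (1 + \<sigma>) * s powr (1 + \<sigma> - 1)) (at s)"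
    using assms(2) by (rule has_real_derivative_powr)
  then have "((\<lambda>s. s powr (1 + \<sigma>) / (1 + \<sigma>)) has_real_derivative
               (1 + \<sigma>) * s powr (1 + \<sigma> - 1) / (1 + \<sigma>)) (at s)"
    by (rule DERIV_cdivide)
  then show ?thesis using assms
    by (simp add: power_disutility_def [abs_def] power_marginal_def)
qed

definition AFPO ::
  "'a measure \<Rightarrow> ('a \<Rightarrow> real) \<Rightarrow> ('a \<Rightarrow> real) \<Rightarrow> (real \<Rightarrow> real) \<Rightarrow> (real \<Rightarrow> real)
   \<Rightarrow> (real \<Rightarrow> real) \<Rightarrow> (real \<Rightarrow> real) \<Rightarrow> bool" where
  "AFPO M X1 X2 dv1 dv2 h1 h2 \<longleftrightarrow>
     (\<forall>s\<ge>0. h1 s \<ge> 0 \<and> h2 s \<ge> 0 \<and> h1 s + h2 s = s) \<and>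
     (\<exists>(J :: real \<Rightarrow> real) (\<alpha>1 :: real) (\<alpha>2 :: real). \<alpha>1 > 0 \<and> \<alpha>2 > 0 \<and>
        (\<forall>s\<ge>0. J s \<ge> 0 \<and> \<alpha>1 * dv1 (h1 s) = J s \<and> \<alpha>2 * dv2 (h2 s) = J s)) \<and>
     (\<integral>\<omega>. h1 (X1 \<omega> + X2 \<omega>) \<partial>M) = (\<integral>\<omega>. X1 \<omega> \<partial>M) \<and>
     (\<integral>\<omega>. h2 (X1 \<omega> + X2 \<omega>) \<partial>M) = (\<integral>\<omega>. X2 \<omega> \<partial>M)"

end

theory Submission
  imports Defs
begin

lemma slope3:
  fixes \<phi> :: "real \<Rightarrow> real"
  assumes cv: "convex_on I \<phi>" and I: "y \<in> I" "w \<in> I" and yx: "y < x" "x < w"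
  shows "(\<phi> x - \<phi> y) / (x - y) \<le> (\<phi> w - \<phi> x) / (w - x)"
proof -
  have "(\<phi> y - \<phi> x) / (y - x) \<le> (\<phi> y - \<phi> w) / (y - w)"
    using convex_on_slope_le(1)[OF cv I yx] by auto
  also have "\<dots> \<le> (\<phi> x - \<phi> w) / (x - w)"
    using convex_on_slope_le(2)[OF cv I yx] by auto
  finally have "(\<phi> y - \<phi> x) / (y - x) \<le> (\<phi> x - \<phi> w) / (x - w)" .
  moreover have "(\<phi> y - \<phi> x) / (y - x) = (\<phi> x - \<phi> y) / (x - y)"
    by (simp add: divide_simps) (simp add: algebra_simps)
  moreover have "(\<phi> x - \<phi> w) / (x - w) = (\<phi> w - \<phi> x) / (w - x)"
    by (simp add: divide_simps) (simp add: algebra_simps)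
  ultimately show ?thesis by simp
qed

lemma subgrad_exists:
  fixes \<phi> :: "real \<Rightarrow> real"
  assumes cv: "convex_on UNIV \<phi>"
  shows "\<exists>k. \<forall>y. \<phi> x + k * (y - x) \<le> \<phi> y"
proof -
  define S where "S = (\<lambda>y. (\<phi> x - \<phi> y) / (x - y)) ` {..<x}"
  define k where "k = Sup S"
  have ne: "S \<noteq> {}" unfolding S_def by auto
  have bd: "\<And>s. s \<in> S \<Longrightarrow> s \<le> (\<phi> w - \<phi> x) / (w - x)" if "x < w" for w
    using slope3[OF cv, of _ w x] that unfolding S_def by auto
  have bdd: "bdd_above S" using bd[of "x+1"] by (auto intro!: bdd_aboveI)
  show ?thesis
  proof (intro exI allI)
    fix y
    consider "y < x" | "y = x" | "y > x" by linarith
    then show "\<phi> x + k * (y - x) \<le> \<phi> y"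
    proof cases
      case 1
      have "(\<phi> x - \<phi> y) / (x - y) \<le> k" unfolding k_def
        by (rule cSup_upper[OF _ bdd]) (use 1 in \<open>auto simp: S_def\<close>)
      then have "\<phi> x - \<phi> y \<le> k * (x - y)" using 1 by (simp add: divide_simps)
      then show ?thesis by (simp add: algebra_simps)
    next
      case 2 then show ?thesis by simp
    next
      case 3
      have "k \<le> (\<phi> y - \<phi> x) / (y - x)" unfolding k_def
        by (rule cSup_least[OF ne]) (use bd 3 in auto)
      then have "k * (y - x) \<le> \<phi> y - \<phi> x" using 3 by (simp add: divide_simps)
      then show ?thesis by (simp add: algebra_simps)
    qed
  qed
qed

lemma subgrad_left:
  fixes \<phi> :: "real \<Rightarrow> real"
  assumes cv: "convex_on UNIV \<phi>" and k: "\<forall>y. \<phi> x0 + k * (y - x0) \<le> \<phi> y"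
    and y: "y1 \<le> y2" "y2 \<le> x0"
  shows "\<phi> y2 - \<phi> y1 \<le> k * (y2 - y1)"
proof (cases "y1 = x0")
  case True then show ?thesis using y by simp
next
  case False
  then have lt: "y1 < x0" using y by simp
  define t where "t = (x0 - y2) / (x0 - y1)"
  have t01: "0 \<le> t" "t \<le> 1" using lt y by (auto simp: t_def divide_simps)
  have eq: "y2 = (1 - (1 - t)) *\<^sub>R y1 + (1 - t) *\<^sub>R x0"
    using lt unfolding t_def by (simp add: divide_simps; simp add: algebra_simps)
  have "\<phi> y2 \<le> (1 - (1 - t)) * \<phi> y1 + (1 - t) * \<phi> x0"
    by (subst eq, rule convex_onD[OF cv]) (use t01 in auto)
  also have "\<phi> x0 \<le> \<phi> y1 + k * (x0 - y1)" using k[rule_format, of y1] by (simp add: algebra_simps)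
  then have "(1 - t) * \<phi> x0 \<le> (1 - t) * (\<phi> y1 + k * (x0 - y1))"
    using t01 by (intro mult_left_mono) auto
  finally have "\<phi> y2 \<le> \<phi> y1 + k * ((1 - t) * (x0 - y1))" by (simp add: algebra_simps)
  also have "(1 - t) * (x0 - y1) = y2 - y1" using lt by (simp add: t_def divide_simps; simp add: algebra_simps)
  finally show ?thesis by simp
qed

lemma subgrad_right:
  fixes \<phi> :: "real \<Rightarrow> real"
  assumes cv: "convex_on UNIV \<phi>" and k: "\<forall>y. \<phi> x0 + k * (y - x0) \<le> \<phi> y"
    and y: "x0 \<le> y1" "y1 \<le> y2"
  shows "k * (y2 - y1) \<le> \<phi> y2 - \<phi> y1"
proof (cases "y2 = x0")
  case True then show ?thesis using y by simp
next
  case False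
  then have lt: "x0 < y2" using y by simp
  define t where "t = (y2 - y1) / (y2 - x0)"
  have t01: "0 \<le> t" "t \<le> 1" using lt y by (auto simp: t_def divide_simps)
  have eq: "y1 = (1 - (1 - t)) *\<^sub>R x0 + (1 - t) *\<^sub>R y2"
    using lt unfolding t_def by (simp add: divide_simps; simp add: algebra_simps)
  have A: "\<phi> y1 \<le> t * \<phi> x0 + (1 - t) * \<phi> y2"
    using convex_onD[OF cv, of "1 - t" x0 y2] t01 eq by simp
  have "\<phi> x0 \<le> \<phi> y2 - k * (y2 - x0)" using k[rule_format, of y2] by (simp add: algebra_simps)
  then have B: "t * \<phi> x0 \<le> t * (\<phi> y2 - k * (y2 - x0))"
    using t01 by (intro mult_left_mono) auto
  have C: "t * (y2 - x0) = y2 - y1" using lt by (simp add: t_def divide_simps)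
  have "\<phi> y1 \<le> \<phi> y2 - k * (t * (y2 - x0))" using A B by (simp add: algebra_simps)
  then show ?thesis using C by simp
qed

lemma chord_inside:
  fixes \<phi> :: "real \<Rightarrow> real"
  assumes cv: "convex_on I \<phi>" and I: "u \<in> I" "v \<in> I" and uv: "u < v" and y: "u \<le> y" "y \<le> v"
  shows "\<phi> y \<le> \<phi> u + (\<phi> v - \<phi> u) / (v - u) * (y - u)"
proof -
  define t where "t = (y - u) / (v - u)"
  have t01: "0 \<le> t" "t \<le> 1" using uv y by (auto simp: t_def divide_simps)
  have eq: "y = (1 - t) *\<^sub>R u + t *\<^sub>R v"
    using uv unfolding t_def by (simp add: divide_simps; simp add: algebra_simps)
  have A: "\<phi> y \<le> (1 - t) * \<phi> u + t * \<phi> v"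
    using convex_onD[OF cv t01 I] eq by simp
  have B: "(1 - t) * \<phi> u + t * \<phi> v = \<phi> u + t * (\<phi> v - \<phi> u)"
    by (simp add: algebra_simps)
  have C: "t * (\<phi> v - \<phi> u) = (\<phi> v - \<phi> u) / (v - u) * (y - u)"
    unfolding t_def by simp
  show ?thesis using A B C by linarith
qed

lemma chord_outside:
  fixes \<phi> :: "real \<Rightarrow> real"
  assumes cv: "convex_on I \<phi>" and I: "u \<in> I" "v \<in> I" "y \<in> I" and uv: "u < v" and y: "y \<le> u \<or> v \<le> y"
  shows "\<phi> u + (\<phi> v - \<phi> u) / (v - u) * (y - u) \<le> \<phi> y"
proof -
  define m where "m = (\<phi> v - \<phi> u) / (v - u)"
  consider "y = u" | "y = v" | "y < u" | "v < y" using y by linarith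
  then show ?thesis
  proof cases
    case 1 then show ?thesis by simp
  next
    case 2 then show ?thesis using uv by (simp add: divide_simps)
  next
    case 3
    have "(\<phi> u - \<phi> y) / (u - y) \<le> m" unfolding m_def using slope3[OF cv I(3) I(2) 3 uv] .
    then have "\<phi> u - \<phi> y \<le> m * (u - y)" using 3 by (simp add: divide_simps)
    then show ?thesis unfolding m_def[symmetric] by (simp add: algebra_simps)
  next
    case 4
    have "m \<le> (\<phi> y - \<phi> v) / (y - v)" unfolding m_def using slope3[OF cv I(1) I(3) uv 4] .
    then have "m * (y - v) \<le> \<phi> y - \<phi> v" using 4 by (simp add: divide_simps)
    moreover have "\<phi> u + m * (v - u) = \<phi> v" using uv by (simp add: m_def divide_simps)
    ultimately show ?thesis unfolding m_def[symmetric] by (simp add: algebra_simps)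
  qed
qed

lemma convex_measurable:
  fixes \<phi> :: "real \<Rightarrow> real"
  assumes "convex_on UNIV \<phi>" shows "\<phi> \<in> borel_measurable borel"
  using convex_on_continuous[OF open_UNIV assms] by (rule borel_measurable_continuous_onI)

lemma lemF:
  fixes g a b \<phi> :: "real \<Rightarrow> real"
  assumes cv: "convex_on UNIV \<phi>"
    and gnn: "\<And>s. 0 \<le> g s" and g0: "\<And>s. s \<le> 0 \<Longrightarrow> g s = 0"
    and gi: "integrable lborel g"
    and ai: "integrable lborel (\<lambda>s. a s * g s)" and bi: "integrable lborel (\<lambda>s. b s * g s)"
    and eqm: "(\<integral>s. a s * g s \<partial>lborel) = (\<integral>s. b s * g s \<partial>lborel)"
    and amono: "mono_on {0..} a"
    and am[measurable]: "a \<in> borel_measurable borel" and bm[measurable]: "b \<in> borel_measurable borel"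
    and phib: "integrable lborel (\<lambda>s. \<phi> (b s) * g s)"
    and pat: "\<And>y z. 0 < y \<Longrightarrow> y \<le> z \<Longrightarrow> a y < b y \<Longrightarrow> a z < b z"
  shows "integrable lborel (\<lambda>s. \<phi> (a s) * g s) \<and>
         (\<integral>s. \<phi> (a s) * g s \<partial>lborel) \<le> (\<integral>s. \<phi> (b s) * g s \<partial>lborel)"
proof -
  note phm[measurable] = convex_measurable[OF cv]
  have gm[measurable]: "g \<in> borel_measurable borel" using gi by (simp add: borel_measurable_integrable)
  define P where "P = {z. 0 < z \<and> a z < b z}"
  show ?thesis
  proof (cases "P = {}")
    case True
    then have ba: "b s \<le> a s" if "0 < s" for s using that by (force simp: P_def not_less)
    have nn: "AE s in lborel. 0 \<le> (a s - b s) * g s"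
    proof (intro AE_I2)
      fix s show "0 \<le> (a s - b s) * g s"
        using ba[of s] gnn[of s] g0[of s] by (cases "0 < s") auto
    qed
    have int: "integrable lborel (\<lambda>s. (a s - b s) * g s)"
      using ai bi by (simp add: left_diff_distrib)
    have "(\<integral>s. (a s - b s) * g s \<partial>lborel) = 0"
      using ai bi eqm by (simp add: left_diff_distrib)
    then have ae: "AE s in lborel. (a s - b s) * g s = 0"
      using integral_nonneg_eq_0_iff_AE[OF int nn] by simp
    have ae2: "AE s in lborel. \<phi> (b s) * g s = \<phi> (a s) * g s"
      using ae by eventually_elim auto
    have i1: "integrable lborel (\<lambda>s. \<phi> (a s) * g s)"
      using phib integrable_cong_AE[OF _ _ ae2] by simp
    have "(\<integral>s. \<phi> (b s) * g s \<partial>lborel) = (\<integral>s. \<phi> (a s) * g s \<partial>lborel)"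
      by (rule integral_cong_AE[OF _ _ ae2]) simp_all
    then show ?thesis using i1 by simp
  next
    case False
    define z0 where "z0 = Inf P"
    have bddP: "bdd_below P" unfolding P_def by (rule bdd_belowI[of _ 0]) auto
    have z0nn: "0 \<le> z0" unfolding z0_def using False by (intro cInf_greatest) (auto simp: P_def)
    define x0 where "x0 = a z0"
    obtain k where k: "\<forall>y. \<phi> x0 + k * (y - x0) \<le> \<phi> y" using subgrad_exists[OF cv] by blast
    have pw: "k * (b s - a s) \<le> \<phi> (b s) - \<phi> (a s)" if "0 < s" for s
    proof -
      consider "s < z0" | "s = z0" | "z0 < s" by linarith
      then show ?thesis
      proof cases
        case 1
        then have "s \<notin> P" unfolding z0_def using cInf_lower[OF _ bddP] by force
        then have "b s \<le> a s" using that by (auto simp: P_def)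
        moreover have "a s \<le> x0" unfolding x0_def using amono 1 that z0nn
          by (auto simp: mono_on_def)
        ultimately have "\<phi> (a s) - \<phi> (b s) \<le> k * (a s - b s)"
          by (intro subgrad_left[OF cv k]) auto
        then show ?thesis by (simp add: algebra_simps)
      next
        case 2
        then show ?thesis using k[rule_format, of "b s"] by (simp add: x0_def algebra_simps)
      next
        case 3
        then obtain p where p: "p \<in> P" "p < s" unfolding z0_def using cInf_less_iff[OF False bddP] by auto
        then have "a s < b s" using pat[of p s] by (auto simp: P_def)
        moreover have "x0 \<le> a s" unfolding x0_def using amono 3 z0nn
          by (auto simp: mono_on_def)
        ultimately show ?thesis by (intro subgrad_right[OF cv k]) auto
      qed
    qed
    have pw2: "k * ((b s - a s) * g s) \<le> \<phi> (b s) * g s - \<phi> (a s) * g s" for s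
    proof (cases "0 < s")
      case True then show ?thesis using pw[OF True] gnn[of s]
        by (metis left_diff_distrib mult.assoc mult_right_mono)
    next
      case False then show ?thesis using g0[of s] by simp
    qed
    have lo: "(\<phi> x0 + k * (a s - x0)) * g s \<le> \<phi> (a s) * g s" for s
      using k[rule_format, of "a s"] gnn[of s] by (rule mult_right_mono)
    have up: "\<phi> (a s) * g s \<le> \<phi> (b s) * g s - k * ((b s - a s) * g s)" for s
      using pw2[of s] by simp
    have iL: "integrable lborel (\<lambda>s. (\<phi> x0 + k * (a s - x0)) * g s)"
      using ai gi by (simp add: algebra_simps)
    have iU: "integrable lborel (\<lambda>s. \<phi> (b s) * g s - k * ((b s - a s) * g s))"
      using ai bi phib by (simp add: algebra_simps)
    have ia: "integrable lborel (\<lambda>s. \<phi> (a s) * g s)"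
    proof (rule Bochner_Integration.integrable_bound[OF Bochner_Integration.integrable_add[OF integrable_abs[OF iL] integrable_abs[OF iU]]])
      show "AE s in lborel. norm (\<phi> (a s) * g s) \<le> norm (\<bar>(\<phi> x0 + k * (a s - x0)) * g s\<bar> + \<bar>\<phi> (b s) * g s - k * ((b s - a s) * g s)\<bar>)"
        using lo up by (intro AE_I2) (smt (verit) real_norm_def)
    qed simp
    have "(\<integral>s. \<phi> (b s) * g s \<partial>lborel) - (\<integral>s. \<phi> (a s) * g s \<partial>lborel)
          = (\<integral>s. \<phi> (b s) * g s - \<phi> (a s) * g s \<partial>lborel)"
      using ia phib by simp
    also have "\<dots> \<ge> (\<integral>s. k * ((b s - a s) * g s) \<partial>lborel)"
      using ai bi ia phib pw2 by (intro integral_mono) (auto simp: algebra_simps)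
    also have "(\<integral>s. k * ((b s - a s) * g s) \<partial>lborel) = 0"
      using ai bi eqm by (simp add: left_diff_distrib)
    finally show ?thesis using ia by simp
  qed
qed

lemma lemD:
  fixes f g a \<phi> :: "real \<Rightarrow> real" and I :: "real set"
  assumes cv: "convex_on I \<phi>" and aI: "\<And>s. 0 \<le> s \<Longrightarrow> a s \<in> I"
    and fnn: "\<And>s. 0 \<le> f s" and f0: "\<And>s. s \<le> 0 \<Longrightarrow> f s = 0"
    and gnn: "\<And>s. 0 \<le> g s" and g0: "\<And>s. s \<le> 0 \<Longrightarrow> g s = 0"
    and fi: "integrable lborel f" and gi: "integrable lborel g"
    and eq0: "(\<integral>s. f s \<partial>lborel) = (\<integral>s. g s \<partial>lborel)"
    and afi: "integrable lborel (\<lambda>s. a s * f s)" and agi: "integrable lborel (\<lambda>s. a s * g s)"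
    and eq1: "(\<integral>s. a s * f s \<partial>lborel) = (\<integral>s. a s * g s \<partial>lborel)"
    and amono: "strict_mono_on {0..} a"
    and phf: "integrable lborel (\<lambda>s. \<phi> (a s) * f s)" and phg: "integrable lborel (\<lambda>s. \<phi> (a s) * g s)"
    and quasi: "\<And>x y z. 0 < x \<Longrightarrow> x \<le> y \<Longrightarrow> y \<le> z \<Longrightarrow> g x < f x \<Longrightarrow> g z < f z \<Longrightarrow> g y < f y"
  shows "(\<integral>s. \<phi> (a s) * f s \<partial>lborel) \<le> (\<integral>s. \<phi> (a s) * g s \<partial>lborel)"
proof -
  define D where "D s = g s - f s" for s
  have Di: "integrable lborel D" unfolding D_def[abs_def] using fi gi by simp
  have D0: "(\<integral>s. D s \<partial>lborel) = 0" using fi gi eq0 by (simp add: D_def)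
  have aDi: "integrable lborel (\<lambda>s. a s * D s)" using afi agi by (simp add: D_def right_diff_distrib)
  have aD0: "(\<integral>s. a s * D s \<partial>lborel) = 0" using afi agi eq1 by (simp add: D_def right_diff_distrib)
  have pDi: "integrable lborel (\<lambda>s. \<phi> (a s) * D s)" using phf phg by (simp add: D_def right_diff_distrib)
  have goal: "(\<integral>s. \<phi> (a s) * f s \<partial>lborel) \<le> (\<integral>s. \<phi> (a s) * g s \<partial>lborel) \<longleftrightarrow>
       0 \<le> (\<integral>s. \<phi> (a s) * D s \<partial>lborel)"
    using phf phg by (simp add: D_def right_diff_distrib)
  have Dout: "D s = 0" if "s \<le> 0" for s using that f0 g0 by (simp add: D_def)
  have Dm[measurable]: "D \<in> borel_measurable borel" using Di by (simp add: borel_measurable_integrable)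
  have aezero: "0 \<le> (\<integral>s. \<phi> (a s) * D s \<partial>lborel)" if ae: "AE s in lborel. D s = 0"
  proof -
    have "AE s in lborel. \<phi> (a s) * D s = 0" using ae by eventually_elim simp
    then have "(\<integral>s. \<phi> (a s) * D s \<partial>lborel) = 0"
      by (rule integral_eq_zero_AE)
    then show ?thesis by simp
  qed
  have nonneg_case: "0 \<le> (\<integral>s. \<phi> (a s) * D s \<partial>lborel)" if ae: "AE s in lborel. 0 \<le> D s"
  proof -
    have "AE s in lborel. D s = 0" using integral_nonneg_eq_0_iff_AE[OF Di ae] D0 by simp
    then show ?thesis by (rule aezero)
  qed
  define N where "N = {s. 0 < s \<and> g s < f s}"
  have notN: "0 \<le> D s" if "s \<notin> N" for s
    using that Dout[of s] by (cases "0 < s") (auto simp: N_def D_def)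
  have inN: "D s < 0" if "s \<in> N" for s using that by (auto simp: N_def D_def)
  have main: "0 \<le> (\<integral>s. \<phi> (a s) * D s \<partial>lborel)"
  proof (cases "N = {}")
    case True
    then show ?thesis using notN by (intro nonneg_case AE_I2) auto
  next
    case False
    have bddN: "bdd_below N" unfolding N_def by (rule bdd_belowI[of _ 0]) auto
    define x1 where "x1 = Inf N"
    have x1nn: "0 \<le> x1" unfolding x1_def using False by (intro cInf_greatest) (auto simp: N_def)
    have below: "s \<notin> N" if "s < x1" for s using that cInf_lower[OF _ bddN] unfolding x1_def by force
    have Npos: "0 < s" if "s \<in> N" for s using that by (auto simp: N_def)
    show ?thesis
    proof (cases "bdd_above N")
      case False2: False
      have above: "s \<in> N" if xs: "x1 < s" for s
      proof -
        obtain n1 where n1: "n1 \<in> N" "n1 < s" using xs cInf_less_iff[OF False bddN] unfolding x1_def by auto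
        obtain n2 where n2: "n2 \<in> N" "s < n2" using False2 unfolding bdd_above_def by (meson not_le_imp_less)
        show ?thesis using quasi[of n1 s n2] n1 n2 Npos[OF n1(1)] by (auto simp: N_def)
      qed
      define E where "E s = (a s - a x1) * D s" for s
      have Ei: "integrable lborel E" unfolding E_def using aDi Di by (simp add: left_diff_distrib)
      have E0: "(\<integral>s. E s \<partial>lborel) = 0" unfolding E_def using aDi Di aD0 D0 by (simp add: left_diff_distrib)
      have Ele: "E s \<le> 0" for s
      proof -
        consider "s \<le> 0" | "0 < s" "s < x1" | "s = x1" | "x1 < s" by linarith
        then show ?thesis
        proof cases
          case 1 then show ?thesis by (simp add: E_def Dout)
        next
          case 2
          then have "a s \<le> a x1" using amono x1nn by (auto simp: strict_mono_on_def order_le_less)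
          then show ?thesis using notN[OF below[OF 2(2)]] by (simp add: E_def mult_nonpos_nonneg)
        next
          case 3 then show ?thesis by (simp add: E_def)
        next
          case 4
          then have "a x1 < a s" using amono x1nn by (auto simp: strict_mono_on_def)
          then show ?thesis using inN[OF above[OF 4]] by (simp add: E_def mult_nonneg_nonpos)
        qed
      qed
      have "AE s in lborel. - E s = 0"
        using integral_nonneg_eq_0_iff_AE[of lborel "\<lambda>s. - E s"] Ei E0 Ele by simp
      then have "AE s in lborel. s \<le> x1"
      proof eventually_elim
        case (elim s)
        show ?case
        proof (rule ccontr)
          assume "\<not> s \<le> x1"
          then have "x1 < s" by simp
          then have "a x1 < a s" using amono x1nn by (auto simp: strict_mono_on_def)
          then have "E s < 0" using inN[OF above[OF \<open>x1 < s\<close>]] by (simp add: E_def mult_pos_neg)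
          then show False using elim by simp
        qed
      qed
      then have "emeasure lborel {x1<..} = 0"
        by (subst (asm) AE_iff_measurable[of "{x1<..}"]) (auto simp: not_le)
      moreover have "emeasure lborel {x1<..<x1+1} \<le> emeasure lborel {x1<..}"
        by (intro emeasure_mono) auto
      ultimately show ?thesis by simp
    next
      case True
      define x2 where "x2 = Sup N"
      have x12: "x1 \<le> x2" unfolding x1_def x2_def using cInf_le_cSup[OF False True bddN] .
      have above: "s \<notin> N" if "x2 < s" for s using that cSup_upper[OF _ True] unfolding x2_def by force
      have mid: "s \<in> N" if xs: "x1 < s" "s < x2" for s
      proof -
        obtain n1 where n1: "n1 \<in> N" "n1 < s" using xs cInf_less_iff[OF False bddN] unfolding x1_def by auto
        obtain n2 where n2: "n2 \<in> N" "s < n2" using xs less_cSup_iff[OF False True] unfolding x2_def by auto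
        show ?thesis using quasi[of n1 s n2] n1 n2 Npos[OF n1(1)] by (auto simp: N_def)
      qed
      show ?thesis
      proof (cases "x1 = x2")
        case True
        have "AE s in lborel. 0 \<le> D s"
          using AE_lborel_singleton[of x1]
        proof eventually_elim
          case (elim s)
          then show ?case using notN below above True by (metis linorder_neqE_linordered_idom)
        qed
        then show ?thesis by (rule nonneg_case)
      next
        case False3: False
        then have x12': "x1 < x2" using x12 by simp
        define u where "u = a x1"
        define v where "v = a x2"
        have uv: "u < v" unfolding u_def v_def using amono x1nn x12' by (auto simp: strict_mono_on_def)
        have uI: "u \<in> I" and vI: "v \<in> I" unfolding u_def v_def using aI x1nn x12 by auto
        define m where "m = (\<phi> v - \<phi> u) / (v - u)"
        define ell where "ell y = \<phi> u + m * (y - u)" for y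
        have pw: "0 \<le> (\<phi> (a s) - ell (a s)) * D s" for s
        proof -
          consider "s \<le> 0" | "0 < s" "s < x1" | "s = x1" | "x1 < s" "s < x2" | "s = x2" | "x2 < s" by linarith
          then show ?thesis
          proof cases
            case 1 then show ?thesis by (simp add: Dout)
          next
            case 2
            then have "a s \<le> u" using amono x1nn by (auto simp: strict_mono_on_def u_def order_le_less)
            then have "ell (a s) \<le> \<phi> (a s)" unfolding ell_def m_def
              using chord_outside[OF cv uI vI aI uv] 2 by auto
            then show ?thesis using notN[OF below[OF 2(2)]] by simp
          next
            case 3
            then have "ell (a s) \<le> \<phi> (a s)" unfolding ell_def m_def
              using chord_outside[OF cv uI vI aI uv] x1nn by (auto simp: u_def)
            moreover have "\<phi> (a s) \<le> ell (a s)" unfolding ell_def m_def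
              using chord_inside[OF cv uI vI uv] 3 uv by (auto simp: u_def)
            ultimately show ?thesis by simp
          next
            case 4
            then have "u \<le> a s" "a s \<le> v" using amono x1nn
              by (auto simp: strict_mono_on_def u_def v_def order_le_less)
            then have "\<phi> (a s) \<le> ell (a s)" unfolding ell_def m_def
              using chord_inside[OF cv uI vI uv] by auto
            then show ?thesis using inN[OF mid[OF 4]] by (simp add: mult_nonpos_nonpos)
          next
            case 5
            then have "ell (a s) \<le> \<phi> (a s)" unfolding ell_def m_def
              using chord_outside[OF cv uI vI aI uv] x1nn x12 by (auto simp: v_def)
            moreover have "\<phi> (a s) \<le> ell (a s)" unfolding ell_def m_def
              using chord_inside[OF cv uI vI uv] 5 uv by (auto simp: v_def)
            ultimately show ?thesis by simp
          next
            case 6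
            then have "v \<le> a s" using amono x1nn x12
              by (auto simp: strict_mono_on_def v_def order_le_less)
            then have "ell (a s) \<le> \<phi> (a s)" unfolding ell_def m_def
              using chord_outside[OF cv uI vI aI uv] 6 x1nn x12 by auto
            then show ?thesis using notN[OF above[OF 6]] by simp
          qed
        qed
        have lDi: "integrable lborel (\<lambda>s. ell (a s) * D s)"
          unfolding ell_def using Di aDi by (simp add: algebra_simps)
        have e0: "(\<integral>s. ell (a s) * D s \<partial>lborel) = 0"
          unfolding ell_def using Di aDi D0 aD0 by (simp add: algebra_simps)
        have "(\<integral>s. ell (a s) * D s \<partial>lborel) \<le> (\<integral>s. \<phi> (a s) * D s \<partial>lborel)"
          using lDi pDi pw by (intro integral_mono) (auto simp: algebra_simps)
        then show ?thesis using e0 by simp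
      qed
    qed
  qed
  then show ?thesis using goal by simp
qed

lemma gd_nonneg: "lam > 0 \<Longrightarrow> mu > 0 \<Longrightarrow> 0 \<le> gamma_density mu lam s"
  unfolding gamma_density_def by (auto intro!: mult_nonneg_nonneg divide_nonneg_nonneg Gamma_real_nonneg)

lemma gd_zero: "s \<le> 0 \<Longrightarrow> gamma_density mu lam s = 0"
  unfolding gamma_density_def by auto

lemma gd_pos:
  assumes "lam > 0" "mu > 0" "s > 0" shows "0 < gamma_density mu lam s"
  using assms Gamma_real_pos[OF assms(2)] unfolding gamma_density_def
  by (auto intro!: mult_pos_pos divide_pos_pos)

lemma gd_measurable[measurable]: "gamma_density mu lam \<in> borel_measurable borel"
  unfolding gamma_density_def[abs_def] by measurable

definition Gk :: "real \<Rightarrow> real \<Rightarrow> real" where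
  "Gk mu t = indicator {0..} t * (t powr (mu - 1) / exp t)"

lemma Gk_measurable[measurable]: "Gk mu \<in> borel_measurable borel"
  unfolding Gk_def[abs_def] by measurable

lemma Gk_int:
  assumes "mu > 0"
  shows "integrable lborel (Gk mu) \<and> (\<integral>t. Gk mu t \<partial>lborel) = Gamma mu"
proof -
  have nn: "(\<integral>\<^sup>+t. ennreal (Gk mu t) \<partial>lborel) = ennreal (Gamma mu)"
    using nn_integral_has_integral_lebesgue[OF _ Gamma_integral_real[OF assms]]
    unfolding Gk_def by simp
  have pos: "AE t in lborel. 0 \<le> Gk mu t" by (auto simp: Gk_def)
  have i: "integrable lborel (Gk mu)"
    by (rule integrableI_nn_integral_finite[OF _ pos nn]) simp
  have "(\<integral>t. Gk mu t \<partial>lborel) = enn2real (ennreal (Gamma mu))"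
    using integral_eq_nn_integral[OF _ pos] nn by simp
  then show ?thesis using i Gamma_real_pos[OF assms] by simp
qed

lemma gd_Gk:
  assumes "lam > 0"
  shows "gamma_density mu lam s = lam / Gamma mu * Gk mu (0 + lam * s)"
proof (cases "s > 0")
  case True
  have "lam / Gamma mu * Gk mu (0 + lam * s) = lam / Gamma mu * ((lam * s) powr (mu - 1) / exp (lam * s))"
    using True assms by (simp add: Gk_def)
  also have "\<dots> = lam * lam powr (mu - 1) / Gamma mu * s powr (mu - 1) * exp (- lam * s)"
    using True assms by (simp add: powr_mult exp_minus field_simps)
  also have "lam * lam powr (mu - 1) = lam powr mu"
    using assms by (simp add: powr_mult_base)
  finally have eq: "lam / Gamma mu * Gk mu (0 + lam * s) = lam powr mu / Gamma mu * s powr (mu - 1) * exp (- lam * s)"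
    by simp
  show ?thesis unfolding gamma_density_def by (subst if_P[OF True]) (rule sym[OF eq])
next
  case False
  then show ?thesis using assms by (cases "s = 0") (auto simp: gamma_density_def Gk_def indicator_def zero_le_mult_iff)
qed

lemma gd_int:
  assumes "mu > 0" "lam > 0"
  shows "integrable lborel (gamma_density mu lam) \<and> (\<integral>s. gamma_density mu lam s \<partial>lborel) = 1"
proof -
  have e: "gamma_density mu lam = (\<lambda>s. lam / Gamma mu * Gk mu (0 + lam * s))"
    using gd_Gk[OF assms(2)] by auto
  have i1: "integrable lborel (\<lambda>s. Gk mu (0 + lam * s))"
    using lborel_integrable_real_affine[of "Gk mu" lam 0] Gk_int[OF assms(1)] assms by simp
  have "(\<integral>t. Gk mu t \<partial>lborel) = lam * (\<integral>s. Gk mu (0 + lam * s) \<partial>lborel)"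
    using lborel_integral_real_affine[of lam "Gk mu" 0] assms by simp
  then have "(\<integral>s. Gk mu (0 + lam * s) \<partial>lborel) = Gamma mu / lam"
    using Gk_int[OF assms(1)] assms by (simp add: field_simps)
  moreover have "Gamma mu \<noteq> 0" using Gamma_real_pos[OF assms(1)] by linarith
  ultimately show ?thesis unfolding e using i1 assms by simp
qed

lemma gd_mean_eq:
  assumes "mu > 0" "lam > 0"
  shows "s * gamma_density mu lam s = mu / lam * gamma_density (mu + 1) lam s"
proof (cases "s > 0")
  case True
  have g: "Gamma (mu + 1) = mu * Gamma mu"
    by (intro Gamma_plus1) (use assms in \<open>auto elim!: nonpos_Ints_cases\<close>)
  have "s * s powr (mu - 1) = s powr mu" using True by (simp add: powr_mult_base)
  moreover have "lam powr (mu + 1) = lam * lam powr mu" using assms by (simp add: powr_add)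
  ultimately show ?thesis using True assms g Gamma_real_pos[OF assms(1)]
    by (simp add: gamma_density_def field_simps)
next
  case False then show ?thesis by (simp add: gamma_density_def)
qed

lemma gd_mean:
  assumes "mu > 0" "lam > 0"
  shows "integrable lborel (\<lambda>s. s * gamma_density mu lam s) \<and> (\<integral>s. s * gamma_density mu lam s \<partial>lborel) = mu / lam"
proof -
  have "mu + 1 > 0" using assms by simp
  from gd_int[OF this assms(2)] show ?thesis
    unfolding gd_mean_eq[OF assms] by simp
qed

lemma gd_transfer:
  assumes "gamma_distributed M X mu lam" "lam > 0" "mu > 0" and [measurable]: "F \<in> borel_measurable borel"
  shows "integrable M (\<lambda>\<omega>. F (X \<omega>)) \<longleftrightarrow> integrable lborel (\<lambda>s. F s * gamma_density mu lam s)"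
    and "(\<integral>\<omega>. F (X \<omega>) \<partial>M) = (\<integral>s. F s * gamma_density mu lam s \<partial>lborel)"
proof -
  have D: "distributed M lborel X (\<lambda>s. ennreal (gamma_density mu lam s))"
    using assms(1) unfolding gamma_distributed_def .
  show "integrable M (\<lambda>\<omega>. F (X \<omega>)) \<longleftrightarrow> integrable lborel (\<lambda>s. F s * gamma_density mu lam s)"
    using distributed_integrable[OF D, of F] gd_nonneg[OF assms(2,3)] by (simp add: mult.commute)
  show "(\<integral>\<omega>. F (X \<omega>) \<partial>M) = (\<integral>s. F s * gamma_density mu lam s \<partial>lborel)"
    using distributed_integral[OF D, of F] gd_nonneg[OF assms(2,3)] by (simp add: mult.commute)
qed

definition H :: "real \<Rightarrow> real \<Rightarrow> real" where
  "H c s = (sqrt (1 + 4 * c * s) - 1) / (2 * c)"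

definition K :: "real \<Rightarrow> real \<Rightarrow> real" where
  "K c s = s - H c s"

lemma H_measurable[measurable]: "H c \<in> borel_measurable borel"
  unfolding H_def[abs_def] by measurable

lemma K_measurable[measurable]: "K c \<in> borel_measurable borel"
  unfolding K_def[abs_def] by measurable

lemma H_eq:
  assumes "c > 0" "s \<ge> 0"
  shows "c * (H c s)\<^sup>2 + H c s = s"
proof -
  define R where "R = sqrt (1 + 4 * c * s)"
  have R2: "R\<^sup>2 = 1 + 4 * c * s" using assms unfolding R_def by simp
  have "c * (H c s)\<^sup>2 + H c s = (R\<^sup>2 - 1) / (4 * c)"
    using assms unfolding H_def R_def[symmetric] by (simp add: field_simps power2_eq_square)
  then show ?thesis using R2 assms by simp
qed

lemma H_nonneg: "c > 0 \<Longrightarrow> s \<ge> 0 \<Longrightarrow> 0 \<le> H c s"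
  unfolding H_def by (auto intro!: divide_nonneg_pos)

lemma H_pos: "c > 0 \<Longrightarrow> s > 0 \<Longrightarrow> 0 < H c s"
  unfolding H_def by (auto intro!: divide_pos_pos)

lemma H_unique:
  assumes "c > 0" "h \<ge> 0" "c * h\<^sup>2 + h = s"
  shows "h = H c s"
proof -
  have s: "1 + 4 * c * s = (2 * c * h + 1)\<^sup>2" unfolding assms(3)[symmetric] by (simp add: power2_eq_square algebra_simps)
  have "sqrt (1 + 4 * c * s) = 2 * c * h + 1" unfolding s using assms by simp
  then show ?thesis using assms unfolding H_def by simp
qed

lemma H_le: "c > 0 \<Longrightarrow> s \<ge> 0 \<Longrightarrow> H c s \<le> s"
  using H_eq[of c s] H_nonneg[of c s] by (smt (verit) mult_nonneg_nonneg zero_le_power2)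

lemma H_strict_mono:
  assumes "c > 0" "0 \<le> x" "x < y" shows "H c x < H c y"
  using assms unfolding H_def by (auto intro!: divide_strict_right_mono)

lemma H_mono:
  assumes "c > 0" "0 \<le> x" "x \<le> y" shows "H c x \<le> H c y"
proof (cases "x = y")
  case False then show ?thesis using H_strict_mono[OF assms(1,2), of y] assms by simp
qed simp

lemma H_lip:
  assumes "c > 0" "0 \<le> x" "x \<le> y" shows "H c y - H c x \<le> y - x"
proof -
  have ex: "c * (H c x)\<^sup>2 + H c x = x" and ey: "c * (H c y)\<^sup>2 + H c y = y"
    using H_eq assms by auto
  have m: "H c x \<le> H c y" using H_mono assms by auto
  have "c * (H c y)\<^sup>2 - c * (H c x)\<^sup>2 \<ge> 0"
    using m H_nonneg[of c x] assms by (auto intro!: mult_left_mono power_mono)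
  then show ?thesis using ex ey by linarith
qed

lemma H_scale:
  assumes "c > 0" "r > 0" shows "H c (r * s) = r * H (c * r) s"
  using assms unfolding H_def by (simp add: field_simps)

lemma H_inv_less:
  assumes "d > 0" "v \<ge> 0" "s \<ge> 0"
  shows "v < H d s \<longleftrightarrow> v + d * v\<^sup>2 < s"
proof -
  have w: "H d (v + d * v\<^sup>2) = v" using H_unique[of d v "v + d * v\<^sup>2"] assms by (simp add: algebra_simps)
  have w0: "0 \<le> v + d * v\<^sup>2" using assms by simp
  show ?thesis
  proof
    assume "v < H d s"
    then show "v + d * v\<^sup>2 < s" using H_mono[OF assms(1) assms(3), of "v + d * v\<^sup>2"] w
      by (metis not_le)
  next
    assume "v + d * v\<^sup>2 < s"
    then show "v < H d s" using H_strict_mono[OF assms(1) w0] w by metis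
  qed
qed

lemma K_eq: "c > 0 \<Longrightarrow> s \<ge> 0 \<Longrightarrow> K c s = c * (H c s)\<^sup>2"
  using H_eq[of c s] unfolding K_def by linarith

lemma K_nonneg: "c > 0 \<Longrightarrow> s \<ge> 0 \<Longrightarrow> 0 \<le> K c s"
  using H_le unfolding K_def by force

lemma K_le: "c > 0 \<Longrightarrow> s \<ge> 0 \<Longrightarrow> K c s \<le> s"
  using H_nonneg unfolding K_def by force

lemma K_pos: "c > 0 \<Longrightarrow> s > 0 \<Longrightarrow> 0 < K c s"
  using K_eq[of c s] H_pos[of c s] by simp

lemma K_strict_mono:
  assumes "c > 0" "0 \<le> x" "x < y" shows "K c x < K c y"
proof -
  have "H c x < H c y" using H_strict_mono assms by auto
  moreover have "0 \<le> H c x" using H_nonneg assms by auto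
  ultimately have "(H c x)\<^sup>2 < (H c y)\<^sup>2" by (simp add: power_strict_mono)
  then show ?thesis using K_eq assms by simp
qed

lemma K_lip:
  assumes "c > 0" "0 \<le> x" "x \<le> y" shows "K c y - K c x \<le> y - x"
  using H_mono[OF assms] unfolding K_def by simp

lemma K_mono:
  assumes "c > 0" "0 \<le> x" "x \<le> y" shows "K c x \<le> K c y"
  using H_lip[OF assms] unfolding K_def by simp

lemma K_scale:
  assumes "c > 0" "r > 0" shows "K c (r * s) = r * K (c * r) s"
  using H_scale[OF assms, of s] unfolding K_def by (simp add: algebra_simps)

lemma K_inv_less:
  assumes "d > 0" "v \<ge> 0" "s \<ge> 0"
  shows "v < K d s \<longleftrightarrow> v + sqrt (v / d) < s"
proof -
  define w where "w = v + sqrt (v / d)"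
  have "d * (sqrt (v / d))\<^sup>2 + sqrt (v / d) = w" using assms by (simp add: w_def)
  then have hw: "H d w = sqrt (v / d)" using H_unique[of d "sqrt (v / d)" w] assms by simp
  have kw: "K d w = v" unfolding K_def hw by (simp add: w_def)
  have w0: "0 \<le> w" using assms by (simp add: w_def)
  show ?thesis unfolding w_def[symmetric]
  proof
    assume "v < K d s"
    then show "w < s" using K_mono[OF assms(1) assms(3), of w] kw by (metis not_le)
  next
    assume "w < s"
    then show "v < K d s" using K_strict_mono[OF assms(1) w0] kw by metis
  qed
qed

lemma negH_convex:
  assumes "c > 0" shows "convex_on {0..} (\<lambda>s. - H c s)"
proof (rule convex_on_realI[where f' = "\<lambda>s. - 1 / sqrt (1 + 4 * c * s)"])
  fix x :: real assume x: "x \<in> {0..}"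
  then have p: "0 < 1 + 4 * c * x" using assms by (simp add: add_pos_nonneg)
  have d: "((\<lambda>s. - H c s) has_real_derivative (- (inverse (sqrt (1 + 4 * c * x)) / 2 * (4 * c)) / (2 * c))) (at x)"
    unfolding H_def using p by (auto intro!: derivative_eq_intros)
  have "- (inverse (sqrt (1 + 4 * c * x)) / 2 * (4 * c)) / (2 * c) = - 1 / sqrt (1 + 4 * c * x)"
    using assms by (simp add: field_simps)
  with d show "((\<lambda>s. - H c s) has_real_derivative - 1 / sqrt (1 + 4 * c * x)) (at x)" by simp
next
  fix x y :: real assume "x \<in> {0..}" "y \<in> {0..}" "x \<le> y"
  then show "- 1 / sqrt (1 + 4 * c * x) \<le> - 1 / sqrt (1 + 4 * c * y)"
    using assms by (auto intro!: divide_left_mono mult_pos_pos add_pos_nonneg mult_left_mono)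
qed auto

lemma K_convex:
  assumes "c > 0" shows "convex_on {0..} (K c)"
proof -
  have "convex_on {0..} (\<lambda>s. s + - H c s)"
    by (intro convex_on_add negH_convex assms) (auto simp: convex_on_ident)
  then show ?thesis unfolding K_def[abs_def] by simp
qed

lemma pat_core:
  fixes r d e u :: real
  assumes "u > 0"
  shows "(r * u + d * (r * u)\<^sup>2 < u + e * u\<^sup>2) \<longleftrightarrow> (r - 1 < (e - d * r\<^sup>2) * u)"
proof -
  have "(r * u + d * (r * u)\<^sup>2 < u + e * u\<^sup>2) \<longleftrightarrow> 0 < u * ((1 - r) + (e - d * r\<^sup>2) * u)"
    by (simp add: algebra_simps power2_eq_square)
  also have "\<dots> \<longleftrightarrow> 0 < (1 - r) + (e - d * r\<^sup>2) * u" using assms by (simp add: zero_less_mult_iff)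
  finally show ?thesis by linarith
qed

lemma pat_H:
  assumes c: "c > 0" and d: "d > 0" and r: "r \<ge> 1" and y: "0 < y" "y \<le> z"
    and lt: "H c (r * y) < H d y"
  shows "H c (r * z) < H d z"
proof -
  define e where "e = c * r"
  have e: "e > 0" using c r by (simp add: e_def)
  define uy where "uy = H e y"
  define uz where "uz = H e z"
  have uy: "uy > 0" using H_pos[OF e y(1)] by (simp add: uy_def)
  have uyz: "uy \<le> uz" unfolding uy_def uz_def using H_mono[OF e _ y(2)] y by simp
  have uz: "uz > 0" using uy uyz by simp
  have hy: "H c (r * y) = r * uy" using H_scale[of c r y] c r by (simp add: uy_def e_def)
  have hz: "H c (r * z) = r * uz" using H_scale[of c r z] c r by (simp add: uz_def e_def)
  have ey: "y = uy + e * uy\<^sup>2" using H_eq[OF e, of y] y by (simp add: uy_def algebra_simps)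
  have ez: "z = uz + e * uz\<^sup>2" using H_eq[OF e, of z] y by (simp add: uz_def algebra_simps)
  have "r * uy + d * (r * uy)\<^sup>2 < y"
    using lt H_inv_less[OF d, of "r * uy" y] hy uy r y by simp
  then have "r - 1 < (e - d * r\<^sup>2) * uy" using pat_core[OF uy, of r d e] ey by simp
  moreover have "(e - d * r\<^sup>2) * uy \<le> (e - d * r\<^sup>2) * uz"
  proof -
    have "0 < (e - d * r\<^sup>2) * uy" using \<open>r - 1 < (e - d * r\<^sup>2) * uy\<close> r by linarith
    then have "0 < e - d * r\<^sup>2" using uy by (simp add: zero_less_mult_iff)
    then show ?thesis using uyz by (simp add: mult_left_mono)
  qed
  ultimately have "r - 1 < (e - d * r\<^sup>2) * uz" by linarith
  then have "r * uz + d * (r * uz)\<^sup>2 < z" using pat_core[OF uz, of r d e] ez by simp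
  then show ?thesis using H_inv_less[OF d, of "r * uz" z] hz uz r y by simp
qed

lemma pat_Kcore:
  fixes r d e u :: real
  assumes u: "u > 0" and d: "d > 0" and re: "r * e \<ge> 0"
  shows "(r * e * u\<^sup>2 + sqrt (r * e * u\<^sup>2 / d) < u + e * u\<^sup>2) \<longleftrightarrow> (sqrt (r * e / d) - 1 < e * (1 - r) * u)"
proof -
  have sq: "sqrt (r * e * u\<^sup>2 / d) = u * sqrt (r * e / d)"
    using u by (simp add: real_sqrt_mult real_sqrt_divide)
  have "(r * e * u\<^sup>2 + u * sqrt (r * e / d) < u + e * u\<^sup>2) \<longleftrightarrow> 0 < u * (1 + e * (1 - r) * u - sqrt (r * e / d))"
    by (simp add: algebra_simps power2_eq_square)
  also have "\<dots> \<longleftrightarrow> 0 < 1 + e * (1 - r) * u - sqrt (r * e / d)" using u by (simp add: zero_less_mult_iff)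
  finally show ?thesis unfolding sq by linarith
qed

lemma pat_K:
  assumes c: "c > 0" and d: "d > 0" and r: "r > 0" "r \<le> 1" and y: "0 < y" "y \<le> z"
    and lt: "K c (r * y) < K d y"
  shows "K c (r * z) < K d z"
proof -
  define e where "e = c * r"
  have e: "e > 0" using c r by (simp add: e_def)
  define uy where "uy = H e y"
  define uz where "uz = H e z"
  have uy: "uy > 0" using H_pos[OF e y(1)] by (simp add: uy_def)
  have uyz: "uy \<le> uz" unfolding uy_def uz_def using H_mono[OF e _ y(2)] y by simp
  have uz: "uz > 0" using uy uyz by simp
  have re: "r * e \<ge> 0" using r e by simp
  have hy: "K c (r * y) = r * e * uy\<^sup>2" using K_scale[of c r y] K_eq[OF e, of y] c r y by (simp add: uy_def e_def)
  have hz: "K c (r * z) = r * e * uz\<^sup>2" using K_scale[of c r z] K_eq[OF e, of z] c r y by (simp add: uz_def e_def)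
  have ey: "y = uy + e * uy\<^sup>2" using H_eq[OF e, of y] y by (simp add: uy_def algebra_simps)
  have ez: "z = uz + e * uz\<^sup>2" using H_eq[OF e, of z] y by (simp add: uz_def algebra_simps)
  have "r * e * uy\<^sup>2 + sqrt (r * e * uy\<^sup>2 / d) < y"
    using lt K_inv_less[OF d, of "r * e * uy\<^sup>2" y] hy re y by simp
  then have "sqrt (r * e / d) - 1 < e * (1 - r) * uy" using pat_Kcore[OF uy d re] ey by simp
  moreover have "e * (1 - r) * uy \<le> e * (1 - r) * uz"
    using uyz e r by (intro mult_left_mono) auto
  ultimately have "sqrt (r * e / d) - 1 < e * (1 - r) * uz" by linarith
  then have "r * e * uz\<^sup>2 + sqrt (r * e * uz\<^sup>2 / d) < z" using pat_Kcore[OF uz d re] ez by simp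
  then show ?thesis using K_inv_less[OF d, of "r * e * uz\<^sup>2" z] hz re y by simp
qed

lemma gd_scale:
  assumes "r > 0" "kap > 0" "nu > 0"
  shows "gamma_density nu kap (u / r) / r = gamma_density nu (kap / r) u"
proof (cases "u > 0")
  case True
  have G: "Gamma nu \<noteq> 0" using Gamma_real_pos[OF assms(3)] by linarith
  have A: "(u / r) powr (nu - 1) / r = u powr (nu - 1) / r powr nu"
    using True assms by (simp add: powr_divide powr_diff field_simps)
  have B: "(kap / r) powr nu = kap powr nu / r powr nu" using assms by (simp add: powr_divide)
  have "gamma_density nu kap (u / r) / r = kap powr nu / Gamma nu * ((u / r) powr (nu - 1) / r) * exp (- kap * (u / r))"
    using True assms G by (simp add: gamma_density_def field_simps)
  also have "\<dots> = kap powr nu / Gamma nu * (u powr (nu - 1) / r powr nu) * exp (- (kap / r) * u)"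
    unfolding A by simp
  also have "\<dots> = (kap powr nu / r powr nu) / Gamma nu * u powr (nu - 1) * exp (- (kap / r) * u)"
    using G assms by (simp add: field_simps)
  also have "\<dots> = gamma_density nu (kap / r) u"
    unfolding B[symmetric] using True by (simp add: gamma_density_def)
  finally show ?thesis .
next
  case False then show ?thesis using assms by (simp add: gamma_density_def zero_less_divide_iff)
qed

lemma ln_gd:
  assumes "s > 0" "b > 0" "nu > 0"
  shows "ln (gamma_density nu b s) = ln (b powr nu / Gamma nu) + (nu - 1) * ln s - b * s"
proof -
  have pos: "b powr nu / Gamma nu > 0" using assms Gamma_real_pos[OF assms(3)] by simp
  have G: "Gamma nu \<noteq> 0" using Gamma_real_pos[OF assms(3)] by linarith
  have e: "gamma_density nu b s = (b powr nu / Gamma nu) * (s powr (nu - 1) * exp (- b * s))"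
    unfolding gamma_density_def if_P[OF assms(1)] by (simp only: mult.assoc)
  have "ln (gamma_density nu b s) = ln (b powr nu / Gamma nu) + ln (s powr (nu - 1) * exp (- b * s))"
    unfolding e by (rule ln_mult_pos[OF pos]) (use assms in simp)
  also have "ln (s powr (nu - 1) * exp (- b * s)) = ln (s powr (nu - 1)) + ln (exp (- b * s))"
    using assms by (intro ln_mult_pos) auto
  finally show ?thesis using assms by (simp add: ln_powr)
qed

lemma quasi_gamma:
  assumes mu: "mu > 0" and nu: "nu > 0" and lam: "lam > 0" and b: "b > 0" and nm: "nu \<le> mu"
    and x: "0 < x" "x \<le> y" "y \<le> z"
    and gx: "gamma_density nu b x < gamma_density mu lam x"
    and gz: "gamma_density nu b z < gamma_density mu lam z"
  shows "gamma_density nu b y < gamma_density mu lam y"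
proof -
  define C where "C = ln (b powr nu / Gamma nu) - ln (lam powr mu / Gamma mu)"
  define G where "G s = C + (nu - mu) * ln s + (lam - b) * s" for s
  have iff: "gamma_density nu b s < gamma_density mu lam s \<longleftrightarrow> G s < 0" if "s > 0" for s
  proof -
    have "gamma_density nu b s < gamma_density mu lam s \<longleftrightarrow> ln (gamma_density nu b s) < ln (gamma_density mu lam s)"
      using gd_pos[of b nu s] gd_pos[of lam mu s] that assms by simp
    also have "\<dots> \<longleftrightarrow> ln (gamma_density nu b s) - ln (gamma_density mu lam s) < 0" by linarith
    also have "ln (gamma_density nu b s) - ln (gamma_density mu lam s) = G s"
      using ln_gd[OF that b nu] ln_gd[OF that lam mu] by (simp add: G_def C_def algebra_simps)
    finally show ?thesis .
  qed
  have Gx: "G x < 0" using iff gx x by simp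
  have Gz: "G z < 0" using iff gz x by simp
  show ?thesis
  proof (cases "x = z")
    case True then show ?thesis using x gx by simp
  next
    case False
    then have xz: "x < z" using x by simp
    define t where "t = (y - x) / (z - x)"
    have t01: "0 \<le> t" "t \<le> 1" using x xz by (auto simp: t_def divide_simps)
    have yeq: "y = (1 - t) *\<^sub>R x + t *\<^sub>R z" using xz unfolding t_def
      by (simp add: divide_simps; simp add: algebra_simps)
    have "(1 - t) * ln x + t * ln z \<le> ln y"
      using concave_onD[OF ln_concave t01, of x z] x yeq by simp
    then have lnineq: "(nu - mu) * ln y \<le> (nu - mu) * ((1 - t) * ln x + t * ln z)"
      using nm by (intro mult_left_mono_neg) auto
    have ylin: "y = (1 - t) * x + t * z" using yeq by simp
    have lin: "(lam - b) * y = (1 - t) * ((lam - b) * x) + t * ((lam - b) * z)"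
      unfolding ylin by (simp add: algebra_simps)
    have comb: "(1 - t) * G x + t * G z = C + (nu - mu) * ((1 - t) * ln x + t * ln z) + ((1 - t) * ((lam - b) * x) + t * ((lam - b) * z))"
      unfolding G_def by (simp add: algebra_simps)
    have "G y \<le> (1 - t) * G x + t * G z"
      using \<open>(nu - mu) * ln y \<le> (nu - mu) * ((1 - t) * ln x + t * ln z)\<close> lin comb unfolding G_def by linarith
    also have "\<dots> < 0"
    proof -
      have "(1 - t) * G x \<le> 0" using Gx t01 by (simp add: mult_nonneg_nonpos)
      moreover have "t * G z \<le> 0" using Gz t01 by (simp add: mult_nonneg_nonpos)
      moreover have "(1 - t) * G x < 0 \<or> t * G z < 0" using Gx Gz t01
        by (cases "t = 0") (auto simp: mult_pos_neg)
      ultimately show ?thesis by linarith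
    qed
    finally show ?thesis using iff x by simp
  qed
qed

lemma afpo_char:
  assumes A: "AFPO M X1 X2 (power_marginal \<sigma>) (power_marginal \<sigma>2) h1 h2"
    and sg: "\<sigma> > 0" and s2: "\<sigma>2 = 2 * \<sigma>"
  shows "\<exists>c>0. \<forall>s>0. h2 s = H c s \<and> h1 s = K c s"
proof -
  obtain J \<alpha>1 \<alpha>2 where a1: "\<alpha>1 > 0" and a2: "\<alpha>2 > 0"
    and J: "\<And>s. s \<ge> 0 \<Longrightarrow> J s \<ge> 0 \<and> \<alpha>1 * power_marginal \<sigma> (h1 s) = J s \<and> \<alpha>2 * power_marginal \<sigma>2 (h2 s) = J s"
    and hs: "\<And>s. s \<ge> 0 \<Longrightarrow> h1 s \<ge> 0 \<and> h2 s \<ge> 0 \<and> h1 s + h2 s = s"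
    using A unfolding AFPO_def by blast
  define c where "c = (\<alpha>2 / \<alpha>1) powr (1 / \<sigma>)"
  have c: "c > 0" using a1 a2 by (simp add: c_def)
  have main: "h2 s = H c s \<and> h1 s = K c s" if s: "s > 0" for s
  proof -
    define p where "p = h1 s"
    define q where "q = h2 s"
    have p0: "p \<ge> 0" and q0: "q \<ge> 0" and pq: "p + q = s" using hs[of s] s by (auto simp: p_def q_def)
    have eq: "\<alpha>1 * p powr \<sigma> = \<alpha>2 * q powr (2 * \<sigma>)"
      using J[of s] s s2 by (simp add: p_def q_def power_marginal_def)
    have qpos: "q > 0"
    proof (rule ccontr)
      assume "\<not> q > 0" then have "q = 0" using q0 by simp
      then have "p = 0" using eq a1 by simp
      then show False using pq s \<open>q = 0\<close> by simp
    qed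
    have "p powr \<sigma> = (\<alpha>2 / \<alpha>1) * q powr (2 * \<sigma>)" using eq a1 by (simp add: field_simps)
    then have "(p powr \<sigma>) powr (1 / \<sigma>) = ((\<alpha>2 / \<alpha>1) * q powr (2 * \<sigma>)) powr (1 / \<sigma>)" by simp
    moreover have "(p powr \<sigma>) powr (1 / \<sigma>) = p" using sg p0 by (simp add: powr_powr powr_one)
    moreover have "((\<alpha>2 / \<alpha>1) * q powr (2 * \<sigma>)) powr (1 / \<sigma>) = c * (q powr (2 * \<sigma>)) powr (1 / \<sigma>)"
      unfolding c_def by (rule powr_mult)
    ultimately have "p = c * (q powr (2 * \<sigma>)) powr (1 / \<sigma>)" by simp
    also have "(q powr (2 * \<sigma>)) powr (1 / \<sigma>) = q\<^sup>2"
      using sg qpos by (simp add: powr_powr)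
    finally have "p = c * q\<^sup>2" .
    then have "c * q\<^sup>2 + q = s" using pq by simp
    then have "q = H c s" using H_unique[OF c q0] by simp
    moreover then have "p = K c s" using pq unfolding K_def by simp
    ultimately show ?thesis by (simp add: p_def q_def)
  qed
  show ?thesis using c main by blast
qed

lemma subst_scale:
  fixes F g :: "real \<Rightarrow> real"
  assumes r: "r > 0"
  shows "integrable lborel (\<lambda>x. F (r * x) * g x) \<longleftrightarrow> integrable lborel (\<lambda>u. F u * (g (u / r) / r))"
    and "(\<integral>x. F (r * x) * g x \<partial>lborel) = (\<integral>u. F u * (g (u / r) / r) \<partial>lborel)"
proof -
  define Q where "Q u = F u * (g (u / r) / r)" for u
  have e: "(\<lambda>x. F (r * x) * g x) = (\<lambda>x. r * Q (0 + r * x))"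
    using r by (auto simp: Q_def)
  have "integrable lborel (\<lambda>x. r * Q (0 + r * x)) \<longleftrightarrow> integrable lborel (\<lambda>x. Q (0 + r * x))"
    using r by simp
  also have "\<dots> \<longleftrightarrow> integrable lborel Q" using lborel_integrable_real_affine_iff[of r Q 0] r by auto
  finally show "integrable lborel (\<lambda>x. F (r * x) * g x) \<longleftrightarrow> integrable lborel (\<lambda>u. F u * (g (u / r) / r))"
    unfolding e Q_def[abs_def] .
  have "(\<integral>u. Q u \<partial>lborel) = r * (\<integral>x. Q (0 + r * x) \<partial>lborel)"
    using lborel_integral_real_affine[of r Q 0] r by simp
  also have "\<dots> = (\<integral>x. r * Q (0 + r * x) \<partial>lborel)" by simp
  finally show "(\<integral>x. F (r * x) * g x \<partial>lborel) = (\<integral>u. F u * (g (u / r) / r) \<partial>lborel)"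
    unfolding e by (simp add: Q_def)
qed

lemma pos_int:
  fixes w :: "real \<Rightarrow> real"
  assumes wi: "integrable lborel w" and w0: "\<And>s. 0 \<le> w s" and wp: "\<And>s. s > 0 \<Longrightarrow> 0 < w s"
  shows "0 < (\<integral>s. w s \<partial>lborel)"
proof -
  have ge: "0 \<le> (\<integral>s. w s \<partial>lborel)" using w0 by simp
  show ?thesis
  proof (rule ccontr)
    assume "\<not> ?thesis"
    then have "(\<integral>s. w s \<partial>lborel) = 0" using ge by simp
    then have "AE s in lborel. w s = 0" using integral_nonneg_eq_0_iff_AE[OF wi] w0 by simp
    then have ae: "AE s in lborel. w s = 0" .
    have imp: "\<forall>s. w s = 0 \<longrightarrow> (s::real) \<le> 0" using wp by (metis less_irrefl not_le)
    have "AE s in lborel. (s::real) \<le> 0" using ae by (rule eventually_mono) (use imp in blast)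
    then have "emeasure lborel {0::real<..} = 0"
      by (subst (asm) AE_iff_measurable[of "{0<..}"]) (auto simp: not_le)
    moreover have "emeasure lborel {0::real<..<1} \<le> emeasure lborel {0::real<..}"
      by (intro emeasure_mono) auto
    ultimately show False by simp
  qed
qed

lemma int_lin_bound:
  fixes a w :: "real \<Rightarrow> real"
  assumes wi: "integrable lborel (\<lambda>s. s * w s)" and w0: "\<And>s. 0 \<le> w s" and wz: "\<And>s. s \<le> 0 \<Longrightarrow> w s = 0"
    and am[measurable]: "a \<in> borel_measurable borel" and wm[measurable]: "w \<in> borel_measurable borel"
    and ab: "\<And>s. s \<ge> 0 \<Longrightarrow> \<bar>a s\<bar> \<le> C * s"
  shows "integrable lborel (\<lambda>s. a s * w s)"
proof (rule Bochner_Integration.integrable_bound[of _ "\<lambda>s. C * (s * w s)"])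
  show "integrable lborel (\<lambda>s. C * (s * w s))" using wi by simp
  show "AE s in lborel. norm (a s * w s) \<le> norm (C * (s * w s))"
  proof (intro AE_I2)
    fix s :: real
    show "norm (a s * w s) \<le> norm (C * (s * w s))"
    proof (cases "s \<le> 0")
      case True then show ?thesis using wz by simp
    next
      case False
      then have "\<bar>a s\<bar> * w s \<le> C * s * w s" using ab[of s] w0[of s] by (intro mult_right_mono) auto
      moreover have "C * (s * w s) \<le> \<bar>C\<bar> * (s * w s)"
        by (rule mult_right_mono) (use w0[of s] False in auto)
      ultimately have X: "\<bar>a s\<bar> * w s \<le> \<bar>C\<bar> * (s * w s)" by linarith
      then show ?thesis using w0[of s] False by (simp add: abs_mult)
    qed
  qed
qed simp

lemma compare_generic:
  fixes a b \<phi> :: "real \<Rightarrow> real"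
  assumes mu: "mu > 0" and nu: "nu > 0" and lam: "lam > 0" and kap: "kap > 0" and nm: "nu \<le> mu"
    and r: "r > 0"
    and am[measurable]: "a \<in> borel_measurable borel" and bm[measurable]: "b \<in> borel_measurable borel"
    and amono: "strict_mono_on {0..} a"
    and ab: "\<And>s. s \<ge> 0 \<Longrightarrow> 0 \<le> a s \<and> a s \<le> s" and bb: "\<And>s. s \<ge> 0 \<Longrightarrow> 0 \<le> b s \<and> b s \<le> s"
    and e1: "(\<integral>s. a (r * s) * gamma_density nu kap s \<partial>lborel) = (\<integral>s. a s * gamma_density mu lam s \<partial>lborel)"
    and e2: "(\<integral>s. b s * gamma_density nu kap s \<partial>lborel) = (\<integral>s. a s * gamma_density mu lam s \<partial>lborel)"
    and pat: "\<And>y z. 0 < y \<Longrightarrow> y \<le> z \<Longrightarrow> a (r * y) < b y \<Longrightarrow> a (r * z) < b z"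
    and cv: "convex_on UNIV \<phi>"
    and phf: "integrable lborel (\<lambda>s. \<phi> (a s) * gamma_density mu lam s)"
    and phg: "integrable lborel (\<lambda>s. \<phi> (b s) * gamma_density nu kap s)"
  shows "(\<integral>s. \<phi> (a s) * gamma_density mu lam s \<partial>lborel) \<le> (\<integral>s. \<phi> (b s) * gamma_density nu kap s \<partial>lborel)"
proof -
  define f where "f = gamma_density mu lam"
  define g where "g = gamma_density nu kap"
  define gh where "gh = gamma_density nu (kap / r)"
  have ghe: "g (u / r) / r = gh u" for u unfolding g_def gh_def using gd_scale[OF r kap nu] by simp
  have kr: "kap / r > 0" using kap r by simp
  note phm[measurable] = convex_measurable[OF cv]
  have [measurable]: "f \<in> borel_measurable borel" "g \<in> borel_measurable borel" "gh \<in> borel_measurable borel"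
    unfolding f_def g_def gh_def by measurable
  have fmean: "integrable lborel (\<lambda>s. s * f s)" unfolding f_def using gd_mean[OF mu lam] by simp
  have gmean: "integrable lborel (\<lambda>s. s * g s)" unfolding g_def using gd_mean[OF nu kap] by simp
  have ghmean: "integrable lborel (\<lambda>s. s * gh s)" unfolding gh_def using gd_mean[OF nu kr] by simp
  have ar_m[measurable]: "(\<lambda>s. a (r * s)) \<in> borel_measurable borel" by measurable
  have afi: "integrable lborel (\<lambda>s. a s * f s)"
    by (rule int_lin_bound[OF fmean, of _ 1]) (use ab in \<open>auto simp: f_def gd_nonneg[OF lam mu] gd_zero\<close>)
  have bgi: "integrable lborel (\<lambda>s. b s * g s)"
    by (rule int_lin_bound[OF gmean, of _ 1]) (use bb in \<open>auto simp: g_def gd_nonneg[OF kap nu] gd_zero\<close>)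
  have agi: "integrable lborel (\<lambda>s. a (r * s) * g s)"
  proof (rule int_lin_bound[OF gmean, of _ r])
    fix s :: real assume "s \<ge> 0" then show "\<bar>a (r * s)\<bar> \<le> r * s" using ab[of "r * s"] r by simp
  qed (auto simp: g_def gd_nonneg[OF kap nu] gd_zero)
  have aghi: "integrable lborel (\<lambda>s. a s * gh s)"
    by (rule int_lin_bound[OF ghmean, of _ 1]) (use ab in \<open>auto simp: gh_def gd_nonneg[OF kr nu] gd_zero\<close>)
  have F: "integrable lborel (\<lambda>s. \<phi> (a (r * s)) * g s) \<and>
         (\<integral>s. \<phi> (a (r * s)) * g s \<partial>lborel) \<le> (\<integral>s. \<phi> (b s) * g s \<partial>lborel)"
  proof (rule lemF[OF cv])
    show "mono_on {0..} (\<lambda>s. a (r * s))"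
      using amono r by (auto simp: mono_on_def strict_mono_on_def order_le_less intro!: mult_left_mono)
    show "(\<integral>s. a (r * s) * g s \<partial>lborel) = (\<integral>s. b s * g s \<partial>lborel)"
      using e1 e2 by (simp add: g_def)
  qed (use pat phg agi bgi in \<open>auto simp: g_def gd_nonneg[OF kap nu] gd_zero gd_int[OF nu kap]\<close>)
  have S1: "integrable lborel (\<lambda>u. \<phi> (a u) * gh u)"
    using F subst_scale(1)[OF r, of "\<lambda>u. \<phi> (a u)" g] by (simp add: ghe)
  have S2: "(\<integral>s. \<phi> (a (r * s)) * g s \<partial>lborel) = (\<integral>u. \<phi> (a u) * gh u \<partial>lborel)"
    using subst_scale(2)[OF r, of "\<lambda>u. \<phi> (a u)" g] by (simp add: ghe)
  have S3: "(\<integral>s. a (r * s) * g s \<partial>lborel) = (\<integral>u. a u * gh u \<partial>lborel)"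
    using subst_scale(2)[OF r, of a g] by (simp add: ghe)
  have D: "(\<integral>s. \<phi> (a s) * f s \<partial>lborel) \<le> (\<integral>s. \<phi> (a s) * gh s \<partial>lborel)"
  proof (rule lemD[OF cv, where g = gh])
    show "integrable lborel f" unfolding f_def using gd_int[OF mu lam] by simp
    show "integrable lborel gh" unfolding gh_def using gd_int[OF nu kr] by simp
    show "(\<integral>s. f s \<partial>lborel) = (\<integral>s. gh s \<partial>lborel)"
      unfolding f_def gh_def using gd_int[OF mu lam] gd_int[OF nu kr] by simp
    show "(\<integral>s. a s * f s \<partial>lborel) = (\<integral>s. a s * gh s \<partial>lborel)"
      using e1 S3 by (simp add: f_def g_def)
    show "\<And>x y z. 0 < x \<Longrightarrow> x \<le> y \<Longrightarrow> y \<le> z \<Longrightarrow> gh x < f x \<Longrightarrow> gh z < f z \<Longrightarrow> gh y < f y"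
      unfolding gh_def f_def by (rule quasi_gamma[OF mu nu lam kr nm])
  qed (use amono afi aghi S1 phf in \<open>auto simp: f_def gh_def gd_nonneg[OF lam mu] gd_nonneg[OF kr nu] gd_zero\<close>)
  show ?thesis using D S2 F by (simp add: f_def g_def)
qed

lemma param_cont:
  fixes R g :: "real \<Rightarrow> real"
  assumes gmean: "integrable lborel (\<lambda>s. s * g s)" and g0: "\<And>s. 0 \<le> g s" and gz: "\<And>s. s \<le> 0 \<Longrightarrow> g s = 0"
    and gm[measurable]: "g \<in> borel_measurable borel" and Rm[measurable]: "R \<in> borel_measurable borel"
    and Rb: "\<And>x. x \<ge> 0 \<Longrightarrow> 0 \<le> R x \<and> R x \<le> x"
    and Rl: "\<And>x y. 0 \<le> x \<Longrightarrow> x \<le> y \<Longrightarrow> \<bar>R y - R x\<bar> \<le> y - x"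
  shows "continuous_on {0..} (\<lambda>r. \<integral>s. R (r * s) * g s \<partial>lborel)"
proof -
  define L where "L = (\<integral>s. s * g s \<partial>lborel)"
  have sg: "0 \<le> s * g s" for s using g0[of s] gz[of s] by (cases "s \<le> 0") auto
  have L0: "0 \<le> L" unfolding L_def using sg by (simp add: integral_nonneg)
  have ri: "integrable lborel (\<lambda>s. R (r * s) * g s)" if "r \<ge> 0" for r
  proof (rule int_lin_bound[OF gmean g0 gz, of _ r])
    fix s :: real assume "s \<ge> 0" then show "\<bar>R (r * s)\<bar> \<le> r * s" using Rb[of "r * s"] that by simp
  qed simp_all
  have Rl2: "\<bar>R y - R x\<bar> \<le> \<bar>y - x\<bar>" if "0 \<le> x" "0 \<le> y" for x y
    using Rl[of x y] Rl[of y x] that by (cases "x \<le> y") (auto simp: abs_minus_commute)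
  have "L-lipschitz_on {0..} (\<lambda>r. \<integral>s. R (r * s) * g s \<partial>lborel)"
  proof (rule lipschitz_onI)
    fix x y :: real assume x: "x \<in> {0..}" and y: "y \<in> {0..}"
    have "dist (\<integral>s. R (x * s) * g s \<partial>lborel) (\<integral>s. R (y * s) * g s \<partial>lborel)
        = \<bar>\<integral>s. (R (x * s) - R (y * s)) * g s \<partial>lborel\<bar>"
      using ri x y by (simp add: dist_real_def left_diff_distrib)
    also have "\<dots> \<le> (\<integral>s. \<bar>x - y\<bar> * (s * g s) \<partial>lborel)"
    proof (rule integral_abs_bound_integral)
      show "integrable lborel (\<lambda>s. (R (x * s) - R (y * s)) * g s)"
        using ri x y by (simp add: left_diff_distrib)
      show "integrable lborel (\<lambda>s. \<bar>x - y\<bar> * (s * g s))" using gmean by simp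
      fix s :: real
      show "\<bar>(R (x * s) - R (y * s)) * g s\<bar> \<le> \<bar>x - y\<bar> * (s * g s)"
      proof (cases "s \<le> 0")
        case True then show ?thesis using gz by simp
      next
        case False
        have "\<bar>R (x * s) - R (y * s)\<bar> \<le> \<bar>x * s - y * s\<bar>"
          using Rl2[of "y * s" "x * s"] x y False by (simp add: abs_minus_commute)
        also have "\<dots> = \<bar>x - y\<bar> * s" using False by (simp add: abs_mult left_diff_distrib[symmetric])
        finally have "\<bar>R (x * s) - R (y * s)\<bar> * g s \<le> \<bar>x - y\<bar> * s * g s"
          using g0[of s] by (intro mult_right_mono) auto
        then show ?thesis using g0[of s] by (simp add: abs_mult mult.assoc)
      qed
    qed
    also have "\<dots> = L * dist x y" unfolding L_def by (simp add: dist_real_def)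
    finally show "dist (\<integral>s. R (x * s) * g s \<partial>lborel) (\<integral>s. R (y * s) * g s \<partial>lborel) \<le> L * dist x y" .
  qed (rule L0)
  then show ?thesis by (rule lipschitz_on_continuous_on)
qed

lemma H_sqrt_scale:
  assumes c: "c > 0" and R: "R \<ge> 1" and s: "s \<ge> 0"
  shows "sqrt R * H c s \<le> H c (R * s)"
proof -
  define h where "h = H c s"
  have h0: "h \<ge> 0" using H_nonneg[OF c s] by (simp add: h_def)
  have he: "c * h\<^sup>2 + h = s" using H_eq[OF c s] by (simp add: h_def)
  define v where "v = sqrt R * h"
  have v0: "v \<ge> 0" using h0 R by (simp add: v_def)
  have sR1: "1 \<le> sqrt R" using R by simp
  have "sqrt R * 1 \<le> sqrt R * sqrt R" using sR1 by (intro mult_left_mono) auto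
  then have sR: "sqrt R \<le> R" using R by simp
  have "v + c * v\<^sup>2 = sqrt R * h + R * (c * h\<^sup>2)" using R by (simp add: v_def power_mult_distrib)
  also have "\<dots> \<le> R * h + R * (c * h\<^sup>2)" using sR h0 by (simp add: mult_right_mono)
  also have "\<dots> = R * s" unfolding he[symmetric] by (simp add: algebra_simps)
  finally have le: "v + c * v\<^sup>2 \<le> R * s" .
  have "H c (v + c * v\<^sup>2) = v" using H_unique[OF c v0, of "v + c * v\<^sup>2"] by (simp add: algebra_simps)
  moreover have "0 \<le> v + c * v\<^sup>2" using v0 c by simp
  then have "H c (v + c * v\<^sup>2) \<le> H c (R * s)" using H_mono[OF c _ le] by simp
  ultimately show ?thesis by (simp add: v_def h_def)
qed

lemma H_props:
  assumes c: "c > 0"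
  shows "\<And>x. x \<ge> 0 \<Longrightarrow> 0 \<le> H c x \<and> H c x \<le> x"
    and "\<And>x y. 0 \<le> x \<Longrightarrow> x \<le> y \<Longrightarrow> \<bar>H c y - H c x\<bar> \<le> y - x"
    and "strict_mono_on {0..} (H c)"
proof -
  show "\<And>x. x \<ge> 0 \<Longrightarrow> 0 \<le> H c x \<and> H c x \<le> x" using H_nonneg[OF c] H_le[OF c] by auto
  show "\<And>x y. 0 \<le> x \<Longrightarrow> x \<le> y \<Longrightarrow> \<bar>H c y - H c x\<bar> \<le> y - x"
    using H_lip[OF c] H_mono[OF c] by fastforce
  show "strict_mono_on {0..} (H c)" using H_strict_mono[OF c] by (auto simp: strict_mono_on_def)
qed

lemma K_props:
  assumes c: "c > 0"
  shows "\<And>x. x \<ge> 0 \<Longrightarrow> 0 \<le> K c x \<and> K c x \<le> x"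
    and "\<And>x y. 0 \<le> x \<Longrightarrow> x \<le> y \<Longrightarrow> \<bar>K c y - K c x\<bar> \<le> y - x"
    and "strict_mono_on {0..} (K c)"
proof -
  show "\<And>x. x \<ge> 0 \<Longrightarrow> 0 \<le> K c x \<and> K c x \<le> x" using K_nonneg[OF c] K_le[OF c] by auto
  show "\<And>x y. 0 \<le> x \<Longrightarrow> x \<le> y \<Longrightarrow> \<bar>K c y - K c x\<bar> \<le> y - x"
    using K_lip[OF c] K_mono[OF c] by fastforce
  show "strict_mono_on {0..} (K c)" using K_strict_mono[OF c] by (auto simp: strict_mono_on_def)
qed

lemma gd_facts:
  assumes "mu > 0" "lam > 0"
  shows "\<And>s. 0 \<le> gamma_density mu lam s" "\<And>s. s \<le> 0 \<Longrightarrow> gamma_density mu lam s = 0"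
    "integrable lborel (gamma_density mu lam)" "(\<integral>s. gamma_density mu lam s \<partial>lborel) = 1"
    "integrable lborel (\<lambda>s. s * gamma_density mu lam s)"
    "(\<integral>s. s * gamma_density mu lam s \<partial>lborel) = mu / lam"
    "\<And>s. s > 0 \<Longrightarrow> 0 < gamma_density mu lam s"
  using gd_nonneg[OF assms(2,1)] gd_zero gd_int[OF assms] gd_mean[OF assms] gd_pos[OF assms(2,1)] by auto

lemma rule_int:
  assumes "mu > 0" "lam > 0" and Rm: "R \<in> borel_measurable borel"
    and Rb: "\<And>x. x \<ge> 0 \<Longrightarrow> 0 \<le> R x \<and> R x \<le> x"
  shows "integrable lborel (\<lambda>s. R s * gamma_density mu lam s)"
  by (rule int_lin_bound[OF gd_facts(5)[OF assms(1,2)] gd_facts(1,2)[OF assms(1,2)] Rm, of 1])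
     (use Rb in auto)

lemma mean_compare:
  fixes \<phi> :: "real \<Rightarrow> real"
  assumes mu: "mu > 0" and nu: "nu > 0" and lam: "lam > 0" and kap: "kap > 0" and nm: "nu \<le> mu"
    and me: "mu / lam = nu / kap"
    and cv: "convex_on {0..} \<phi>" and [measurable]: "\<phi> \<in> borel_measurable borel"
    and pb: "\<And>x. x \<ge> 0 \<Longrightarrow> \<bar>\<phi> x\<bar> \<le> x"
  shows "(\<integral>s. \<phi> s * gamma_density mu lam s \<partial>lborel) \<le> (\<integral>s. \<phi> s * gamma_density nu kap s \<partial>lborel)"
proof -
  note F = gd_facts[OF mu lam] and G = gd_facts[OF nu kap]
  have i1: "integrable lborel (\<lambda>s. \<phi> s * gamma_density mu lam s)"
    by (rule int_lin_bound[OF F(5) F(1,2), of _ 1]) (use pb in auto)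
  have i2: "integrable lborel (\<lambda>s. \<phi> s * gamma_density nu kap s)"
    by (rule int_lin_bound[OF G(5) G(1,2), of _ 1]) (use pb in auto)
  show ?thesis
  proof (rule lemD[where a="\<lambda>s. s" and I="{0..}", OF cv])
    show "\<And>x y z. 0 < x \<Longrightarrow> x \<le> y \<Longrightarrow> y \<le> z \<Longrightarrow> gamma_density nu kap x < gamma_density mu lam x \<Longrightarrow>
        gamma_density nu kap z < gamma_density mu lam z \<Longrightarrow> gamma_density nu kap y < gamma_density mu lam y"
      by (rule quasi_gamma[OF mu nu lam kap nm])
  qed (use F G me i1 i2 in \<open>auto simp: strict_mono_on_def\<close>)
qed

lemma rho_H:
  assumes mu: "mu > 0" and nu: "nu > 0" and lam: "lam > 0" and kap: "kap > 0" and nm: "nu \<le> mu"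
    and me: "mu / lam = nu / kap" and c: "c > 0"
  shows "\<exists>r\<ge>1. (\<integral>s. H c (r * s) * gamma_density nu kap s \<partial>lborel) = (\<integral>s. H c s * gamma_density mu lam s \<partial>lborel)"
proof -
  note F = gd_facts[OF mu lam] and G = gd_facts[OF nu kap]
  define g where "g = gamma_density nu kap"
  define \<Phi> where "\<Phi> r = (\<integral>s. H c (r * s) * g s \<partial>lborel)" for r
  define m where "m = (\<integral>s. H c s * gamma_density mu lam s \<partial>lborel)"
  have gm[measurable]: "g \<in> borel_measurable borel" unfolding g_def by measurable
  have cont: "continuous_on {0..} \<Phi>"
    unfolding \<Phi>_def by (rule param_cont[OF G(5)[folded g_def] G(1,2)[folded g_def] gm H_measurable H_props(1,2)[OF c]]) auto
  have hg: "integrable lborel (\<lambda>s. H c s * g s)" unfolding g_def using rule_int[OF nu kap H_measurable H_props(1)[OF c]] .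
  have "(\<integral>s. - H c s * gamma_density mu lam s \<partial>lborel) \<le> (\<integral>s. - H c s * gamma_density nu kap s \<partial>lborel)"
    by (rule mean_compare[OF mu nu lam kap nm me negH_convex[OF c]]) (use H_props(1)[OF c] in auto)
  then have P1: "\<Phi> 1 \<le> m" unfolding \<Phi>_def m_def g_def by simp
  have P1pos: "0 < \<Phi> 1" unfolding \<Phi>_def
  proof (simp, rule pos_int[OF hg])
    fix s :: real show "0 \<le> H c s * g s" using H_nonneg[OF c, of s] G(1,2)[of s] by (cases "s \<le> 0") (auto simp: g_def)
  next
    fix s :: real assume "s > 0" then show "0 < H c s * g s" using H_pos[OF c] G(7) by (simp add: g_def)
  qed
  define R where "R = max 1 ((m / \<Phi> 1)\<^sup>2)"
  have R1: "R \<ge> 1" by (simp add: R_def)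
  have sR: "m / \<Phi> 1 \<le> sqrt R"
  proof -
    have "sqrt ((m / \<Phi> 1)\<^sup>2) \<le> sqrt R" unfolding R_def by (rule real_sqrt_le_mono) simp
    then have "\<bar>m / \<Phi> 1\<bar> \<le> sqrt R" by (simp only: real_sqrt_abs)
    then show ?thesis by linarith
  qed
  have "sqrt R * \<Phi> 1 \<le> \<Phi> R"
  proof -
    have "sqrt R * \<Phi> 1 = (\<integral>s. sqrt R * H c s * g s \<partial>lborel)" unfolding \<Phi>_def by (simp add: mult.assoc)
    also have "\<dots> \<le> \<Phi> R" unfolding \<Phi>_def
    proof (rule integral_mono)
      show "integrable lborel (\<lambda>s. sqrt R * H c s * g s)" using hg by (simp add: mult.assoc)
      show "integrable lborel (\<lambda>s. H c (R * s) * g s)"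
        by (rule int_lin_bound[OF G(5)[folded g_def] G(1,2)[folded g_def], of _ R]) (use H_props(1)[OF c, of "R * _"] R1 in auto)
      fix s :: real
      show "sqrt R * H c s * g s \<le> H c (R * s) * g s"
      proof (cases "s \<le> 0")
        case True then show ?thesis using G(2) by (simp add: g_def)
      next
        case False then show ?thesis using H_sqrt_scale[OF c R1, of s] G(1)[of s]
          by (intro mult_right_mono) (auto simp: g_def)
      qed
    qed
    finally show ?thesis .
  qed
  moreover have "m \<le> sqrt R * \<Phi> 1" using sR P1pos by (simp add: divide_le_eq)
  ultimately have PR: "m \<le> \<Phi> R" by linarith
  have "continuous_on {1..R} \<Phi>" using cont by (rule continuous_on_subset) auto
  then obtain r where "1 \<le> r" "r \<le> R" "\<Phi> r = m" using IVT'[of \<Phi> 1 m R] P1 PR R1 by auto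
  then show ?thesis unfolding \<Phi>_def m_def g_def by auto
qed

lemma rho_K:
  assumes mu: "mu > 0" and nu: "nu > 0" and lam: "lam > 0" and kap: "kap > 0" and nm: "nu \<le> mu"
    and me: "mu / lam = nu / kap" and c: "c > 0"
  shows "\<exists>r>0. r \<le> 1 \<and> (\<integral>s. K c (r * s) * gamma_density nu kap s \<partial>lborel) = (\<integral>s. K c s * gamma_density mu lam s \<partial>lborel)"
proof -
  note F = gd_facts[OF mu lam] and G = gd_facts[OF nu kap]
  define g where "g = gamma_density nu kap"
  define \<Phi> where "\<Phi> r = (\<integral>s. K c (r * s) * g s \<partial>lborel)" for r
  define m where "m = (\<integral>s. K c s * gamma_density mu lam s \<partial>lborel)"
  have gm[measurable]: "g \<in> borel_measurable borel" unfolding g_def by measurable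
  have cont: "continuous_on {0..} \<Phi>"
    unfolding \<Phi>_def by (rule param_cont[OF G(5)[folded g_def] G(1,2)[folded g_def] gm K_measurable K_props(1,2)[OF c]]) auto
  have "(\<integral>s. K c s * gamma_density mu lam s \<partial>lborel) \<le> (\<integral>s. K c s * gamma_density nu kap s \<partial>lborel)"
    by (rule mean_compare[OF mu nu lam kap nm me K_convex[OF c]]) (use K_props(1)[OF c] in auto)
  then have P1: "m \<le> \<Phi> 1" unfolding \<Phi>_def m_def g_def by simp
  have K0: "K c 0 = 0" unfolding K_def H_def by simp
  have P0: "\<Phi> 0 = 0" unfolding \<Phi>_def by (simp add: K0)
  have mpos: "0 < m" unfolding m_def
  proof (rule pos_int[OF rule_int[OF mu lam K_measurable K_props(1)[OF c]]])
    fix s :: real show "0 \<le> K c s * gamma_density mu lam s"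
      using K_nonneg[OF c, of s] F(1,2)[of s] by (cases "s \<le> 0") auto
  next
    fix s :: real assume "s > 0" then show "0 < K c s * gamma_density mu lam s" using K_pos[OF c] F(7) by simp
  qed
  have "continuous_on {0..1} \<Phi>" using cont by (rule continuous_on_subset) auto
  then obtain r where r: "0 \<le> r" "r \<le> 1" "\<Phi> r = m" using IVT'[of \<Phi> 0 m 1] P1 P0 mpos by auto
  then have "r \<noteq> 0" using P0 mpos by auto
  then have "r > 0" using r(1) by simp
  then show ?thesis using r unfolding \<Phi>_def m_def g_def by (intro exI[of _ r]) auto
qed

lemma core_H:
  fixes \<phi> :: "real \<Rightarrow> real"
  assumes mu: "mu > 0" and nu: "nu > 0" and lam: "lam > 0" and kap: "kap > 0" and nm: "nu \<le> mu"
    and me: "mu / lam = nu / kap" and c: "c > 0" and d: "d > 0"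
    and eqm: "(\<integral>s. H d s * gamma_density nu kap s \<partial>lborel) = (\<integral>s. H c s * gamma_density mu lam s \<partial>lborel)"
    and cv: "convex_on UNIV \<phi>"
    and phf: "integrable lborel (\<lambda>s. \<phi> (H c s) * gamma_density mu lam s)"
    and phg: "integrable lborel (\<lambda>s. \<phi> (H d s) * gamma_density nu kap s)"
  shows "(\<integral>s. \<phi> (H c s) * gamma_density mu lam s \<partial>lborel) \<le> (\<integral>s. \<phi> (H d s) * gamma_density nu kap s \<partial>lborel)"
proof -
  obtain r where r: "r \<ge> 1" and e1: "(\<integral>s. H c (r * s) * gamma_density nu kap s \<partial>lborel) = (\<integral>s. H c s * gamma_density mu lam s \<partial>lborel)"
    using rho_H[OF mu nu lam kap nm me c] by blast
  show ?thesis
  proof (rule compare_generic[OF mu nu lam kap nm _ H_measurable H_measurable H_props(3)[OF c] H_props(1)[OF c] H_props(1)[OF d] e1 eqm _ cv phf phg])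
    show "0 < r" using r by simp
    fix y z :: real assume "0 < y" "y \<le> z" "H c (r * y) < H d y"
    then show "H c (r * z) < H d z" using pat_H[OF c d r] by blast
  qed
qed

lemma core_K:
  fixes \<phi> :: "real \<Rightarrow> real"
  assumes mu: "mu > 0" and nu: "nu > 0" and lam: "lam > 0" and kap: "kap > 0" and nm: "nu \<le> mu"
    and me: "mu / lam = nu / kap" and c: "c > 0" and d: "d > 0"
    and eqm: "(\<integral>s. K d s * gamma_density nu kap s \<partial>lborel) = (\<integral>s. K c s * gamma_density mu lam s \<partial>lborel)"
    and cv: "convex_on UNIV \<phi>"
    and phf: "integrable lborel (\<lambda>s. \<phi> (K c s) * gamma_density mu lam s)"
    and phg: "integrable lborel (\<lambda>s. \<phi> (K d s) * gamma_density nu kap s)"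
  shows "(\<integral>s. \<phi> (K c s) * gamma_density mu lam s \<partial>lborel) \<le> (\<integral>s. \<phi> (K d s) * gamma_density nu kap s \<partial>lborel)"
proof -
  obtain r where r: "r > 0" "r \<le> 1" and e1: "(\<integral>s. K c (r * s) * gamma_density nu kap s \<partial>lborel) = (\<integral>s. K c s * gamma_density mu lam s \<partial>lborel)"
    using rho_K[OF mu nu lam kap nm me c] by blast
  show ?thesis
  proof (rule compare_generic[OF mu nu lam kap nm r(1) K_measurable K_measurable K_props(3)[OF c] K_props(1)[OF c] K_props(1)[OF d] e1 eqm _ cv phf phg])
    fix y z :: real assume "0 < y" "y \<le> z" "K c (r * y) < K d y"
    then show "K c (r * z) < K d z" using pat_K[OF c d r] by blast
  qed
qed

lemma gd_AE_pos:
  assumes "gamma_distributed M X mu lam"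
  shows "AE \<omega> in M. X \<omega> > 0"
proof -
  have D: "distributed M lborel X (\<lambda>s. ennreal (gamma_density mu lam s))"
    using assms unfolding gamma_distributed_def .
  have Xm: "X \<in> measurable M lborel" using distributed_measurable[OF D] .
  have "AE x in density lborel (\<lambda>s. ennreal (gamma_density mu lam s)). x > 0"
  proof (subst AE_density)
    show "(\<lambda>s. ennreal (gamma_density mu lam s)) \<in> borel_measurable lborel" by measurable
    show "AE x in lborel. 0 < ennreal (gamma_density mu lam x) \<longrightarrow> 0 < x"
    proof (intro AE_I2 impI)
      fix x :: real assume "0 < ennreal (gamma_density mu lam x)"
      then show "0 < x" using gd_zero[of x mu lam] by (cases "0 < x") auto
    qed
  qed
  then have "AE x in distr M lborel X. x > 0" unfolding distributed_distr_eq_density[OF D] .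
  then show ?thesis using AE_distr_iff[OF Xm, of "\<lambda>x. x > 0"] by simp
qed

lemma gd_meas:
  assumes "gamma_distributed M X mu lam"
  shows "X \<in> borel_measurable M"
  using distributed_measurable[of M lborel X] assms unfolding gamma_distributed_def by simp

lemma mean_rule:
  fixes h F :: "real \<Rightarrow> real" and S :: "'a \<Rightarrow> real"
  assumes ae: "AE \<omega> in M. h (S \<omega>) = F (S \<omega>)" and Fm[measurable]: "F \<in> borel_measurable borel"
    and Sm[measurable]: "S \<in> borel_measurable M"
    and e: "(\<integral>\<omega>. h (S \<omega>) \<partial>M) = v" and v: "v \<noteq> 0"
  shows "(\<integral>\<omega>. F (S \<omega>) \<partial>M) = v"
proof (cases "(\<lambda>\<omega>. h (S \<omega>)) \<in> borel_measurable M")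
  case True
  have "(\<integral>\<omega>. h (S \<omega>) \<partial>M) = (\<integral>\<omega>. F (S \<omega>) \<partial>M)"
    by (rule integral_cong_AE[OF True _ ae]) measurable
  then show ?thesis using e by simp
next
  case False
  then have "\<not> integrable M (\<lambda>\<omega>. h (S \<omega>))" using borel_measurable_integrable by blast
  then have "(\<integral>\<omega>. h (S \<omega>) \<partial>M) = 0" by (rule not_integrable_integral_eq)
  then show ?thesis using e v by simp
qed

lemma transfer_rule:
  fixes h F \<phi> :: "real \<Rightarrow> real"
  assumes G: "gamma_distributed M S mu lam" and lam: "lam > 0" and mu: "mu > 0"
    and eqr: "\<And>s. s > 0 \<Longrightarrow> h s = F s" and Fm[measurable]: "F \<in> borel_measurable borel"
    and cv: "convex_on UNIV \<phi>"
    and i: "integrable M (\<lambda>\<omega>. \<phi> (h (S \<omega>)))"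
  shows "integrable lborel (\<lambda>s. \<phi> (F s) * gamma_density mu lam s)"
    and "(\<integral>\<omega>. \<phi> (h (S \<omega>)) \<partial>M) = (\<integral>s. \<phi> (F s) * gamma_density mu lam s \<partial>lborel)"
proof -
  note phm[measurable] = convex_measurable[OF cv]
  have Sm[measurable]: "S \<in> borel_measurable M" using gd_meas[OF G] .
  have ae: "AE \<omega> in M. \<phi> (h (S \<omega>)) = \<phi> (F (S \<omega>))"
    using gd_AE_pos[OF G] by eventually_elim (simp add: eqr)
  have hm: "(\<lambda>\<omega>. \<phi> (h (S \<omega>))) \<in> borel_measurable M" using i by (rule borel_measurable_integrable)
  have i2: "integrable M (\<lambda>\<omega>. \<phi> (F (S \<omega>)))"
    using i integrable_cong_AE[OF hm _ ae] by simp
  have pm: "(\<lambda>s. \<phi> (F s)) \<in> borel_measurable borel" by measurable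
  show "integrable lborel (\<lambda>s. \<phi> (F s) * gamma_density mu lam s)"
    using gd_transfer(1)[OF G lam mu pm] i2 by simp
  have "(\<integral>\<omega>. \<phi> (h (S \<omega>)) \<partial>M) = (\<integral>\<omega>. \<phi> (F (S \<omega>)) \<partial>M)"
    by (rule integral_cong_AE[OF hm _ ae]) measurable
  also have "\<dots> = (\<integral>s. \<phi> (F s) * gamma_density mu lam s \<partial>lborel)"
    using gd_transfer(2)[OF G lam mu pm] by simp
  finally show "(\<integral>\<omega>. \<phi> (h (S \<omega>)) \<partial>M) = (\<integral>s. \<phi> (F s) * gamma_density mu lam s \<partial>lborel)" .
qed

lemma mean_transfer:
  fixes h F :: "real \<Rightarrow> real"
  assumes G: "gamma_distributed M S mu lam" and lam: "lam > 0" and mu: "mu > 0"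
    and eqr: "\<And>s. s > 0 \<Longrightarrow> h s = F s" and Fm[measurable]: "F \<in> borel_measurable borel"
    and e: "(\<integral>\<omega>. h (S \<omega>) \<partial>M) = v" and v: "v \<noteq> 0"
  shows "(\<integral>s. F s * gamma_density mu lam s \<partial>lborel) = v"
proof -
  have Sm[measurable]: "S \<in> borel_measurable M" using gd_meas[OF G] .
  have ae: "AE \<omega> in M. h (S \<omega>) = F (S \<omega>)"
    using gd_AE_pos[OF G] by eventually_elim (simp add: eqr)
  have "(\<integral>\<omega>. F (S \<omega>) \<partial>M) = v" by (rule mean_rule[OF ae Fm Sm e v])
  then show ?thesis using gd_transfer(2)[OF G lam mu Fm] by simp
qed

lemma gd_expect:
  assumes G: "gamma_distributed M X mu lam" and lam: "lam > 0" and mu: "mu > 0"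
  shows "(\<integral>\<omega>. X \<omega> \<partial>M) = mu / lam"
  using gd_transfer(2)[OF G lam mu, of "\<lambda>s. s"] gd_mean[OF mu lam] by simp

theorem proposition5p4:
  fixes M :: "'a measure" and N :: "'b measure"
    and X1 X2 :: "'a \<Rightarrow> real" and Y1 Y2 :: "'b \<Rightarrow> real"
    and mu1 mu2 lam nu1 nu2 kap \<sigma>1 \<sigma>2 \<tau>1 \<tau>2 :: real
    and h1 h2 g1 g2 :: "real \<Rightarrow> real"
  assumes "prob_space M" and "prob_space N"
    and "mu1 > 0" "mu2 > 0" "lam > 0"
    and "nu1 > 0" "nu2 > 0" "kap > 0"
    and "prob_space.indep_var M borel X1 borel X2"
    and "gamma_distributed M X1 mu1 lam" and "gamma_distributed M X2 mu2 lam"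
    and "gamma_distributed M (\<lambda>\<omega>. X1 \<omega> + X2 \<omega>) (mu1 + mu2) lam"
    and "prob_space.indep_var N borel Y1 borel Y2"
    and "gamma_distributed N Y1 nu1 kap" and "gamma_distributed N Y2 nu2 kap"
    and "gamma_distributed N (\<lambda>\<omega>. Y1 \<omega> + Y2 \<omega>) (nu1 + nu2) kap"
    and "\<sigma>1 > 0" "\<sigma>2 = 2 * \<sigma>1"
    and "\<tau>1 > 0" "\<tau>2 = 2 * \<tau>1"
    and "(\<integral>\<omega>. X1 \<omega> \<partial>M) = (\<integral>\<omega>. Y1 \<omega> \<partial>N)"
    and "(\<integral>\<omega>. X2 \<omega> \<partial>M) = (\<integral>\<omega>. Y2 \<omega> \<partial>N)"
    and "mu1 + mu2 \<ge> nu1 + nu2"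
    and "(mu1 + mu2) / lam = (nu1 + nu2) / kap"
    and "AFPO M X1 X2 (power_marginal \<sigma>1) (power_marginal \<sigma>2) h1 h2"
    and "AFPO N Y1 Y2 (power_marginal \<tau>1) (power_marginal \<tau>2) g1 g2"
  shows "cx_le M (\<lambda>\<omega>. h1 (X1 \<omega> + X2 \<omega>)) N (\<lambda>\<omega>. g1 (Y1 \<omega> + Y2 \<omega>)) \<and>
         cx_le M (\<lambda>\<omega>. h2 (X1 \<omega> + X2 \<omega>)) N (\<lambda>\<omega>. g2 (Y1 \<omega> + Y2 \<omega>))"

proof -
  note lam = assms(5) and kap = assms(8)
  have mu: "mu1 + mu2 > 0" using assms(3,4) by simp
  have nu: "nu1 + nu2 > 0" using assms(6,7) by simp
  have nm: "nu1 + nu2 \<le> mu1 + mu2" using assms(23) .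
  note me = assms(24)
  obtain c where c: "c > 0" and hc: "\<And>s. s > 0 \<Longrightarrow> h2 s = H c s \<and> h1 s = K c s"
    using afpo_char[OF assms(25) assms(17) assms(18)] by blast
  obtain d where d: "d > 0" and gd: "\<And>s. s > 0 \<Longrightarrow> g2 s = H d s \<and> g1 s = K d s"
    using afpo_char[OF assms(26) assms(19) assms(20)] by blast
  have EX1: "(\<integral>\<omega>. X1 \<omega> \<partial>M) = mu1 / lam" using gd_expect[OF assms(10) lam assms(3)] .
  have EX2: "(\<integral>\<omega>. X2 \<omega> \<partial>M) = mu2 / lam" using gd_expect[OF assms(11) lam assms(4)] .
  have EY1: "(\<integral>\<omega>. Y1 \<omega> \<partial>N) = mu1 / lam" using EX1 assms(21) by simp
  have EY2: "(\<integral>\<omega>. Y2 \<omega> \<partial>N) = mu2 / lam" using EX2 assms(22) by simp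
  have v1: "mu1 / lam \<noteq> 0" using assms(3) lam by simp
  have v2: "mu2 / lam \<noteq> 0" using assms(4) lam by simp
  have A1: "(\<integral>\<omega>. h1 (X1 \<omega> + X2 \<omega>) \<partial>M) = mu1 / lam" and A2: "(\<integral>\<omega>. h2 (X1 \<omega> + X2 \<omega>) \<partial>M) = mu2 / lam"
    using assms(25) EX1 EX2 unfolding AFPO_def by auto
  have B1: "(\<integral>\<omega>. g1 (Y1 \<omega> + Y2 \<omega>) \<partial>N) = mu1 / lam" and B2: "(\<integral>\<omega>. g2 (Y1 \<omega> + Y2 \<omega>) \<partial>N) = mu2 / lam"
    using assms(26) EY1 EY2 unfolding AFPO_def by auto
  have mK1: "(\<integral>s. K c s * gamma_density (mu1 + mu2) lam s \<partial>lborel) = mu1 / lam"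
    by (rule mean_transfer[OF assms(12) lam mu _ K_measurable A1 v1]) (use hc in auto)
  have mK2: "(\<integral>s. K d s * gamma_density (nu1 + nu2) kap s \<partial>lborel) = mu1 / lam"
    by (rule mean_transfer[OF assms(16) kap nu _ K_measurable B1 v1]) (use gd in auto)
  have mH1: "(\<integral>s. H c s * gamma_density (mu1 + mu2) lam s \<partial>lborel) = mu2 / lam"
    by (rule mean_transfer[OF assms(12) lam mu _ H_measurable A2 v2]) (use hc in auto)
  have mH2: "(\<integral>s. H d s * gamma_density (nu1 + nu2) kap s \<partial>lborel) = mu2 / lam"
    by (rule mean_transfer[OF assms(16) kap nu _ H_measurable B2 v2]) (use gd in auto)
  have C1: "cx_le M (\<lambda>\<omega>. h1 (X1 \<omega> + X2 \<omega>)) N (\<lambda>\<omega>. g1 (Y1 \<omega> + Y2 \<omega>))"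
    unfolding cx_le_def
  proof (intro allI impI)
    fix \<phi> :: "real \<Rightarrow> real"
    assume cv: "convex_on UNIV \<phi>" and iM: "integrable M (\<lambda>\<omega>. \<phi> (h1 (X1 \<omega> + X2 \<omega>)))"
      and iN: "integrable N (\<lambda>\<omega>. \<phi> (g1 (Y1 \<omega> + Y2 \<omega>)))"
    have e1: "\<And>s. s > 0 \<Longrightarrow> h1 s = K c s" using hc by auto
    have e2: "\<And>s. s > 0 \<Longrightarrow> g1 s = K d s" using gd by auto
    note T1 = transfer_rule[OF assms(12) lam mu e1 K_measurable cv iM]
    note T2 = transfer_rule[OF assms(16) kap nu e2 K_measurable cv iN]
    have "(\<integral>s. \<phi> (K c s) * gamma_density (mu1 + mu2) lam s \<partial>lborel)
        \<le> (\<integral>s. \<phi> (K d s) * gamma_density (nu1 + nu2) kap s \<partial>lborel)"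
      by (rule core_K[OF mu nu lam kap nm me c d _ cv T1(1) T2(1)]) (simp add: mK1 mK2)
    then show "(\<integral>\<omega>. \<phi> (h1 (X1 \<omega> + X2 \<omega>)) \<partial>M) \<le> (\<integral>\<omega>. \<phi> (g1 (Y1 \<omega> + Y2 \<omega>)) \<partial>N)"
      using T1(2) T2(2) by simp
  qed
  have C2: "cx_le M (\<lambda>\<omega>. h2 (X1 \<omega> + X2 \<omega>)) N (\<lambda>\<omega>. g2 (Y1 \<omega> + Y2 \<omega>))"
    unfolding cx_le_def
  proof (intro allI impI)
    fix \<phi> :: "real \<Rightarrow> real"
    assume cv: "convex_on UNIV \<phi>" and iM: "integrable M (\<lambda>\<omega>. \<phi> (h2 (X1 \<omega> + X2 \<omega>)))"
      and iN: "integrable N (\<lambda>\<omega>. \<phi> (g2 (Y1 \<omega> + Y2 \<omega>)))"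
    have e1: "\<And>s. s > 0 \<Longrightarrow> h2 s = H c s" using hc by auto
    have e2: "\<And>s. s > 0 \<Longrightarrow> g2 s = H d s" using gd by auto
    note T1 = transfer_rule[OF assms(12) lam mu e1 H_measurable cv iM]
    note T2 = transfer_rule[OF assms(16) kap nu e2 H_measurable cv iN]
    have "(\<integral>s. \<phi> (H c s) * gamma_density (mu1 + mu2) lam s \<partial>lborel)
        \<le> (\<integral>s. \<phi> (H d s) * gamma_density (nu1 + nu2) kap s \<partial>lborel)"
      by (rule core_H[OF mu nu lam kap nm me c d _ cv T1(1) T2(1)]) (simp add: mH1 mH2)
    then show "(\<integral>\<omega>. \<phi> (h2 (X1 \<omega> + X2 \<omega>)) \<partial>M) \<le> (\<integral>\<omega>. \<phi> (g2 (Y1 \<omega> + Y2 \<omega>)) \<partial>N)"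
      using T1(2) T2(2) by simp
  qed
  show ?thesis using C1 C2 by simp
qed

end
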